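(* Let $F$ be an admissible fundamental matrix on $J$ and $g\in Y$. Then for every $a\in J$, $\mathcal L_F^{-1}(a,g)\in C^2((-1,1)\setminus\{0\})\cap C^1(-1,1)$ and \[ \mathcal L_F(a,\mathcal L_F^{-1}(a,g))(y)=g(y) \] for all $(y,a)\in((-1,1)\setminus\{0\})\times J$.
   Context: Notation: $A^j{}_k$ is the entry in row $j$, column $k$; a prime denotes $\partial_y$; $\varphi(y,\alpha):=-\frac{2\alpha}{(1-y)^2}+\frac{2\alpha}{1-y}-\frac{2}{\alpha}\log(1-y)$; each occurrence of $\mathcal P(y)$ denotes some polynomial in $y$ with complex coefficients independent of $a$ (different occurrences may differ). Let $a_*\in\mathbb{R}\setminus\{0\}$, $J\subset\mathbb{R}\setminus\{-a_*\}$ compact. An admissible right fundamental matrix $F_R(y,a)$, $(y,a)\in[0,1)\times J$, is the real $4\times4$ matrix with $j$-th column $(\Re f_j,\Im f_j,\Re f_j',\Im f_j')^T(y,a)$, where $\det F_R\neq0$ on $[0,1)\times J$ and $f_1=1+\frac{a_*+a+i}{2(a_*+a)}(1-y)+(1-y)^2\mathcal P(y)$, $f_2=i+i\frac{a_*+a+i}{2(a_*+a)}(1-y)+(1-y)^2\mathcal P(y)$, $f_3=e^{i\varphi(y,a_*+a)}(1-y)[1+\frac{2(a_*+a)-i}{2(a_*+a)}(1-y)+(1-y)^2\mathcal P(y)]+e^{-i\varphi(y,a_*+a)}(1-y)^5\mathcal P(y)$, $f_4=ie^{i\varphi(y,a_*+a)}(1-y)[1+\frac{2(a_*+a)-i}{2(a_*+a)}(1-y)+(1-y)^2\mathcal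 P(y)]+ie^{-i\varphi(y,a_*+a)}(1-y)^5\mathcal P(y)$. An admissible left fundamental matrix $F_L(y)$, $y\in(-1,0]$, is the real $4\times4$ matrix with columns $(\Re g_j,\Im g_j,\Re g_j',\Im g_j')^T$, $\det F_L\neq0$ on $(-1,0]$, $g_1=1+(1+y)\mathcal P(y)$, $g_2=i+(1+y)\mathcal P(y)$, $g_3=\frac{1}{1+y}[1+(1+y)\mathcal P(y)]$, $g_4=\frac{i}{1+y}[1+(1+y)\mathcal P(y)]$. With $M_F(a):=F_L(0)^{-1}F_R(0,a)$, the admissible fundamental matrix on $J$ is $F(y,a):=F_L(y)M_F(a)$ for $y\in(-1,0]$, $F(y,a):=F_R(y,a)$ for $y\in(0,1)$, assuming $M_F(a)^3{}_1\neq0$ for all $a\in J$. Coefficients: on $((-1,1)\setminus\{0\})\times J$ let $A:=-\partial_yF\,F^{-1}$, $p_1=\frac12(A^3{}_3+A^4{}_4)+\frac i2(A^4{}_3-A^3{}_4)$, $p_2=\frac12(A^3{}_3-A^4{}_4)+\frac i2(A^4{}_3+A^3{}_4)$, $q_1=\frac12(A^3{}_1+A^4{}_2)+\frac i2(A^4{}_1-A^3{}_2)$, $q_2=\frac12(A^3{}_1-A^4{}_2)+\frac i2(A^4{}_1+A^3{}_2)$. For $f\in C^2$ on an open subset of $(-1,1)\setminus\{0\}$: $\mathcal L_F(a,f)(y):=f''(y)+p_1(y,a)f'(y)+p_2(y,a)\overline{f'(y)}+q_1(y,a)f(y)+q_2(y,a)\overline{f(y)}$. $Y$ is the space of $f\in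 C(-1,1)$ with $(1+y)(1-y)^2f(y)$ extending continuously to $[-1,1]$. For $g\in Y$: $\alpha_F^k(a,g)(y):=F^{-1}(y,a)^k{}_3\Re g(y)+F^{-1}(y,a)^k{}_4\Im g(y)$ ($F^{-1}(y,a)^k{}_\ell$ the $(k,\ell)$ entry of $F(y,a)^{-1}$), and \begin{align*} \mathcal L_F^{-1}(a,g)(y):=&\sum_{k=1}^2[F(y,a)^1{}_k+iF(y,a)^2{}_k]\int_{-1}^y\alpha_F^k(a,g)(x)dx-\sum_{k=3}^4[F(y,a)^1{}_k+iF(y,a)^2{}_k]\int_y^1\alpha_F^k(a,g)(x)dx\\ &+[F(y,a)^1{}_1+iF(y,a)^2{}_1]\sum_{k=3}^4\frac{M_F(a)^3{}_k}{M_F(a)^3{}_1}\int_{-1}^1\alpha_F^k(a,g)(x)dx. \end{align*} *)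

theory Defs
  imports "HOL-Analysis.Analysis" "HOL-Computational_Algebra.Polynomial"
begin

definition phi :: "real \<Rightarrow> real \<Rightarrow> real" where
  "phi y \<alpha> = - 2 * \<alpha> / (1 - y)^2 + 2 * \<alpha> / (1 - y) - 2 / \<alpha> * ln (1 - y)"

text \<open>The functions f_k (k = 1..4) of an admissible right fundamental matrix, with
  alpha = a_* + a. All polynomials are independent of a.\<close>
definition fR :: "(4 \<Rightarrow> complex poly) \<Rightarrow> (4 \<Rightarrow> complex poly) \<Rightarrow> real \<Rightarrow> 4 \<Rightarrow> real \<Rightarrow> complex" where
  "fR P Q \<alpha> k y =
    (let s = complex_of_real (1 - y);
         c = (complex_of_real \<alpha> + \<i>) / (2 * complex_of_real \<alpha>);
         d = (2 * complex_of_real \<alpha> - \<i>) / (2 * complex_of_real \<alpha>);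
         E = exp (\<i> * complex_of_real (phi y \<alpha>));
         E' = exp (- \<i> * complex_of_real (phi y \<alpha>));
         z = complex_of_real y
     in if k = 1 then 1 + c * s + s^2 * poly (P 1) z
        else if k = 2 then \<i> + \<i> * c * s + s^2 * poly (P 2) z
        else if k = 3 then E * s * (1 + d * s + s^2 * poly (P 3) z) + E' * s^5 * poly (Q 3) z
        else \<i> * E * s * (1 + d * s + s^2 * poly (P 4) z) + \<i> * E' * s^5 * poly (Q 4) z)"

definition gL :: "(4 \<Rightarrow> complex poly) \<Rightarrow> 4 \<Rightarrow> real \<Rightarrow> complex" where
  "gL P k y =
    (let t = complex_of_real (1 + y); z = complex_of_real y
     in if k = 1 then 1 + t * poly (P 1) z
        else if k = 2 then \<i> + t * poly (P 2) z
        else if k = 3 then 1 / t * (1 + t * poly (P 3) z)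
        else \<i> / t * (1 + t * poly (P 4) z))"

definition colvec :: "(real \<Rightarrow> complex) \<Rightarrow> real \<Rightarrow> real^4" where
  "colvec f y = (\<chi> j. if j = 1 then Re (f y) else if j = 2 then Im (f y)
                     else if j = 3 then Re (vector_derivative f (at y))
                     else Im (vector_derivative f (at y)))"

definition FR :: "(4 \<Rightarrow> complex poly) \<Rightarrow> (4 \<Rightarrow> complex poly) \<Rightarrow> real \<Rightarrow> real \<Rightarrow> real \<Rightarrow> real^4^4" where
  "FR P Q astar y a = (\<chi> j k. colvec (fR P Q (astar + a) k) y $ j)"

definition FL :: "(4 \<Rightarrow> complex poly) \<Rightarrow> real \<Rightarrow> real^4^4" where
  "FL PL y = (\<chi> j k. colvec (gL PL k) y $ j)"

definition MF :: "(4 \<Rightarrow> complex poly) \<Rightarrow> (4 \<Rightarrow> complex poly) \<Rightarrow> (4 \<Rightarrow> complex poly) \<Rightarrow> real \<Rightarrow> real \<Rightarrow> real^4^4" where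
  "MF PL P Q astar a = matrix_inv (FL PL 0) ** FR P Q astar 0 a"

definition Ffund :: "(4 \<Rightarrow> complex poly) \<Rightarrow> (4 \<Rightarrow> complex poly) \<Rightarrow> (4 \<Rightarrow> complex poly) \<Rightarrow> real \<Rightarrow> real \<Rightarrow> real \<Rightarrow> real^4^4" where
  "Ffund PL P Q astar y a = (if y \<le> 0 then FL PL y ** MF PL P Q astar a else FR P Q astar y a)"

definition admissible_F :: "real \<Rightarrow> real set \<Rightarrow> (4 \<Rightarrow> complex poly) \<Rightarrow> (4 \<Rightarrow> complex poly) \<Rightarrow> (4 \<Rightarrow> complex poly) \<Rightarrow> bool" where
  "admissible_F astar J PL P Q \<longleftrightarrow>
     astar \<noteq> 0 \<and> compact J \<and> - astar \<notin> J \<and>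
     (\<forall>y\<in>{0..<1}. \<forall>a\<in>J. det (FR P Q astar y a) \<noteq> 0) \<and>
     (\<forall>y\<in>{-1<..0}. det (FL PL y) \<noteq> 0) \<and>
     (\<forall>a\<in>J. MF PL P Q astar a $ 3 $ 1 \<noteq> 0)"

definition coefA :: "(real \<Rightarrow> real^4^4) \<Rightarrow> real \<Rightarrow> real^4^4" where
  "coefA F y = - ((\<chi> j k. vector_derivative (\<lambda>t. F t $ j $ k) (at y)) ** matrix_inv (F y))"

definition p1 :: "(real \<Rightarrow> real^4^4) \<Rightarrow> real \<Rightarrow> complex" where
  "p1 F y = (let A = coefA F y in
     complex_of_real ((A$3$3 + A$4$4) / 2) + \<i> * complex_of_real ((A$4$3 - A$3$4) / 2))"

definition p2 :: "(real \<Rightarrow> real^4^4) \<Rightarrow> real \<Rightarrow> complex" where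
  "p2 F y = (let A = coefA F y in
     complex_of_real ((A$3$3 - A$4$4) / 2) + \<i> * complex_of_real ((A$4$3 + A$3$4) / 2))"

definition q1 :: "(real \<Rightarrow> real^4^4) \<Rightarrow> real \<Rightarrow> complex" where
  "q1 F y = (let A = coefA F y in
     complex_of_real ((A$3$1 + A$4$2) / 2) + \<i> * complex_of_real ((A$4$1 - A$3$2) / 2))"

definition q2 :: "(real \<Rightarrow> real^4^4) \<Rightarrow> real \<Rightarrow> complex" where
  "q2 F y = (let A = coefA F y in
     complex_of_real ((A$3$1 - A$4$2) / 2) + \<i> * complex_of_real ((A$4$1 + A$3$2) / 2))"

definition LF :: "(real \<Rightarrow> real^4^4) \<Rightarrow> (real \<Rightarrow> complex) \<Rightarrow> real \<Rightarrow> complex" where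
  "LF F f y =
     vector_derivative (\<lambda>t. vector_derivative f (at t)) (at y)
     + p1 F y * vector_derivative f (at y) + p2 F y * cnj (vector_derivative f (at y))
     + q1 F y * f y + q2 F y * cnj (f y)"

definition Yspace :: "(real \<Rightarrow> complex) set" where
  "Yspace = {f. continuous_on {-1<..<1} f \<and>
     (\<exists>h. continuous_on {-1..1} h \<and>
          (\<forall>y\<in>{-1<..<1}. h y = complex_of_real ((1 + y) * (1 - y)^2) * f y))}"

definition alphaF :: "(real \<Rightarrow> real^4^4) \<Rightarrow> (real \<Rightarrow> complex) \<Rightarrow> 4 \<Rightarrow> real \<Rightarrow> real" where
  "alphaF F g k x = matrix_inv (F x) $ k $ 3 * Re (g x) + matrix_inv (F x) $ k $ 4 * Im (g x)"

text \<open>L_F^{-1}(a,g); F is y \<mapsto> F(y,a), M is M_F(a). Integrals are Henstock-Kurzweil integrals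
  (which include the improper Riemann and the Lebesgue integrals).\<close>
definition LFinv :: "(real \<Rightarrow> real^4^4) \<Rightarrow> real^4^4 \<Rightarrow> (real \<Rightarrow> complex) \<Rightarrow> real \<Rightarrow> complex" where
  "LFinv F M g y =
     (let Fc = (\<lambda>k. complex_of_real (F y $ 1 $ k) + \<i> * complex_of_real (F y $ 2 $ k)) in
       (\<Sum>k\<in>{1,2}. Fc k * complex_of_real (integral {-1..y} (alphaF F g k)))
     - (\<Sum>k\<in>{3,4}. Fc k * complex_of_real (integral {y..1} (alphaF F g k)))
     + Fc 1 * (\<Sum>k\<in>{3,4}. complex_of_real (M $ 3 $ k / M $ 3 $ 1) *
                             complex_of_real (integral {-1..1} (alphaF F g k))))"

definition C2_on :: "(real \<Rightarrow> complex) \<Rightarrow> real set \<Rightarrow> bool" where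
  "C2_on f S \<longleftrightarrow> f C1_differentiable_on S \<and>
     (\<lambda>t. vector_derivative f (at t)) C1_differentiable_on S"

end

theory Submission
  imports Defs "HOL-Complex_Analysis.Cauchy_Integral_Formula"
begin


lemma minv_works:
  fixes A :: "real^'n^'n"
  assumes "det A \<noteq> 0"
  shows "A ** matrix_inv A = mat 1" "matrix_inv A ** A = mat 1"
proof -
  from assms have "invertible A" by (simp add: invertible_det_nz)
  then obtain B where "A ** B = mat 1 \<and> B ** A = mat 1" unfolding invertible_def by blast
  hence "A ** matrix_inv A = mat 1 \<and> matrix_inv A ** A = mat 1"
    unfolding matrix_inv_def by (rule someI)
  thus "A ** matrix_inv A = mat 1" "matrix_inv A ** A = mat 1" by auto
qed

lemma minv_unique:
  fixes A B :: "real^'n^'n"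
  assumes "A ** B = mat 1"
  shows "matrix_inv A = B" "det A \<noteq> 0"
proof -
  have BA: "B ** A = mat 1" using assms matrix_left_right_inverse by blast
  have "det A * det B = 1" using det_mul[of A B] assms by simp
  thus dA: "det A \<noteq> 0" by auto
  have "matrix_inv A = (B ** A) ** matrix_inv A" by (simp add: BA)
  also have "\<dots> = B ** (A ** matrix_inv A)" by (simp add: matrix_mul_assoc)
  also have "\<dots> = B" by (simp add: minv_works[OF dA])
  finally show "matrix_inv A = B" .
qed

lemma minv_entry:
  fixes A :: "real^'n^'n"
  assumes "det A \<noteq> 0"
  shows "matrix_inv A $ k $ j = det (\<chi> i l. if l = k then (if i = j then 1 else 0) else A$i$l) / det A"
proof -
  let ?x = "matrix_inv A *v axis j 1"
  have "A *v ?x = axis j 1"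
    by (simp add: matrix_vector_mul_assoc minv_works[OF assms])
  hence "?x = (\<chi> k. det(\<chi> i l. if l=k then axis j 1 $ i else A$i$l) / det A)"
    using cramer[OF assms] by blast
  hence "?x $ k = det(\<chi> i l. if l=k then axis j 1 $ i else A$i$l) / det A" by simp
  moreover have "?x $ k = matrix_inv A $ k $ j"
    by (simp add: matrix_vector_mult_def axis_def if_distrib cong: if_cong)
  moreover have "(\<chi> i l. if l=k then axis j 1 $ i else A$i$l) = (\<chi> i l. if l = k then (if i = j then 1 else 0) else A$i$l)"
    by (simp add: axis_def vec_eq_iff)
  ultimately show ?thesis by simp
qed

lemma det_cont:
  fixes M :: "'a::topological_space \<Rightarrow> real^'n^'n"
  assumes "\<And>i j. continuous_on S (\<lambda>x. M x $ i $ j)"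
  shows "continuous_on S (\<lambda>x. det (M x))"
  unfolding det_def by (intro continuous_intros assms)

lemma det_tendsto:
  fixes M :: "'a \<Rightarrow> real^'n^'n"
  assumes "\<And>i j. ((\<lambda>x. M x $ i $ j) \<longlongrightarrow> L $ i $ j) F"
  shows "((\<lambda>x. det (M x)) \<longlongrightarrow> det L) F"
  unfolding det_def by (intro tendsto_intros assms)

lemma minv_cont:
  fixes M :: "'a::topological_space \<Rightarrow> real^'n^'n"
  assumes "\<And>i j. continuous_on S (\<lambda>x. M x $ i $ j)" "\<And>x. x \<in> S \<Longrightarrow> det (M x) \<noteq> 0"
  shows "continuous_on S (\<lambda>x. matrix_inv (M x) $ k $ j)"
proof -
  have h: "continuous_on S (\<lambda>x. (\<chi> i l. if l = k then (if i = j then 1 else 0) else M x$i$l) $ i' $ l')" for i' l'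
    by (cases "l' = k") (auto intro: assms)
  have "continuous_on S (\<lambda>x. det (\<chi> i l. if l = k then (if i = j then 1 else 0) else M x$i$l) / det (M x))"
    by (rule continuous_on_divide[OF det_cont[OF h] det_cont[OF assms(1)]]) (use assms(2) in auto)
  thus ?thesis by (rule continuous_on_cong[THEN iffD1, rotated 2]) (auto simp: minv_entry assms)
qed

lemma minv_tendsto:
  fixes M :: "'a \<Rightarrow> real^'n^'n"
  assumes "\<And>i j. ((\<lambda>x. M x $ i $ j) \<longlongrightarrow> L $ i $ j) F" "det L \<noteq> 0"
  shows "((\<lambda>x. matrix_inv (M x) $ k $ j) \<longlongrightarrow> matrix_inv L $ k $ j) F"
proof -
  have dl: "((\<lambda>x. det (M x)) \<longlongrightarrow> det L) F" by (rule det_tendsto[OF assms(1)])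
  have ev: "eventually (\<lambda>x. det (M x) \<noteq> 0) F"
    using dl assms(2) by (rule tendsto_imp_eventually_ne)
  have "((\<lambda>x. det (\<chi> i l. if l = k then (if i = j then 1 else 0) else M x$i$l) / det (M x)) \<longlongrightarrow>
        det (\<chi> i l. if l = k then (if i = j then 1 else 0) else L$i$l) / det L) F"
    by (rule tendsto_divide[OF det_tendsto dl assms(2)]) (case_tac "j' = k", auto intro: assms)
  hence "((\<lambda>x. det (\<chi> i l. if l = k then (if i = j then 1 else 0) else M x$i$l) / det (M x)) \<longlongrightarrow>
        matrix_inv L $ k $ j) F" by (simp add: minv_entry assms(2))
  thus ?thesis
    by (rule tendsto_cong[THEN iffD1, rotated]) (rule eventually_mono[OF ev], simp add: minv_entry)
qed

lemma matmul_entry: "((A::real^4^4) ** B) $ i $ j = A$i$1 * B$1$j + A$i$2 * B$2$j + A$i$3 * B$3$j + A$i$4 * B$4$j"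
  by (simp add: matrix_matrix_mult_def sum_4)


lemma has_vd_Re: "(f has_vector_derivative f') F \<Longrightarrow> ((\<lambda>x. Re (f x)) has_vector_derivative Re f') F"
  by (rule bounded_linear.has_vector_derivative[OF bounded_linear_Re])
lemma has_vd_Im: "(f has_vector_derivative f') F \<Longrightarrow> ((\<lambda>x. Im (f x)) has_vector_derivative Im f') F"
  by (rule bounded_linear.has_vector_derivative[OF bounded_linear_Im])

lemma vop:
  fixes F :: "real \<Rightarrow> real^4^4" and u v w :: "4 \<Rightarrow> real \<Rightarrow> complex" and g :: "real \<Rightarrow> complex"
    and M :: "real^4^4"
  assumes inv: "\<And>y. y \<in> {-1<..<1} \<Longrightarrow> det (F y) \<noteq> 0"
  and Fu: "\<And>y k. y \<in> {-1<..<1} \<Longrightarrow> F y $1$k = Re (u k y) \<and> F y $2$k = Im (u k y) \<and>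
                                      F y $3$k = Re (v k y) \<and> F y $4$k = Im (v k y)"
  and du: "\<And>y k. y \<in> {-1<..<1} \<Longrightarrow> (u k has_vector_derivative v k y) (at y)"
  and dv: "\<And>y k. y \<in> {-1<..<1} - {0} \<Longrightarrow> (v k has_vector_derivative w k y) (at y)"
  and cv: "\<And>k. continuous_on {-1<..<1} (v k)"
  and cw: "\<And>k. continuous_on ({-1<..<1} - {0}) (w k)"
  and cg: "continuous_on {-1<..<1} g"
  and int1: "\<And>y k. y \<in> {-1<..<1} \<Longrightarrow> k = 1 \<or> k = 2 \<Longrightarrow> alphaF F g k integrable_on {-1..y}"
  and int2: "\<And>y k. y \<in> {-1<..<1} \<Longrightarrow> k = 3 \<or> k = 4 \<Longrightarrow> alphaF F g k integrable_on {y..1}"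
  shows "C2_on (LFinv F M g) ({-1<..<1} - {0}) \<and> LFinv F M g C1_differentiable_on {-1<..<1} \<and>
         (\<forall>y\<in>{-1<..<1} - {0}. LF F (LFinv F M g) y = g y)"
proof -
  define I where "I = {-1<..<1::real}"
  have oI: "open I" "open (I - {0})" by (auto simp: I_def)
  have cu: "continuous_on I (u k)" for k
  proof (intro continuous_at_imp_continuous_on ballI)
    fix y assume "y \<in> I"
    hence "(u k has_vector_derivative v k y) (at y)" using du by (simp add: I_def)
    thus "isCont (u k) y" by (rule has_vector_derivative_continuous)
  qed
  have Fu': "F y $1$k = Re (u k y)" "F y $2$k = Im (u k y)" "F y $3$k = Re (v k y)" "F y $4$k = Im (v k y)"
    if "y \<in> I" for y k using Fu[of y k] that by (auto simp: I_def)
  have cF: "continuous_on I (\<lambda>y. F y $ i $ j)" for i j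
  proof -
    have "i = 1 \<or> i = 2 \<or> i = 3 \<or> i = 4" by (rule exhaust_4)
    thus ?thesis
    proof (elim disjE)
      assume "i = 1" thus ?thesis
        using continuous_on_cong[of I I "\<lambda>y. F y $ 1 $ j" "\<lambda>y. Re (u j y)"] Fu' cu[of j]
        by (auto intro: continuous_intros)
    next
      assume "i = 2" thus ?thesis
        using continuous_on_cong[of I I "\<lambda>y. F y $ 2 $ j" "\<lambda>y. Im (u j y)"] Fu' cu[of j]
        by (auto intro: continuous_intros)
    next
      assume "i = 3" thus ?thesis
        using continuous_on_cong[of I I "\<lambda>y. F y $ 3 $ j" "\<lambda>y. Re (v j y)"] Fu' cv[of j]
        by (auto intro: continuous_intros simp: I_def)
    next
      assume "i = 4" thus ?thesis
        using continuous_on_cong[of I I "\<lambda>y. F y $ 4 $ j" "\<lambda>y. Im (v j y)"] Fu' cv[of j]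
        by (auto intro: continuous_intros simp: I_def)
    qed
  qed
  have cinv: "continuous_on I (\<lambda>y. matrix_inv (F y) $ k $ j)" for k j
    by (rule minv_cont[OF cF]) (use inv in \<open>auto simp: I_def\<close>)
  have cgI: "continuous_on I g" using cg by (simp add: I_def)
  have calpha: "continuous_on I (alphaF F g k)" for k
    unfolding alphaF_def by (intro continuous_intros cinv cgI)
  define c where "c k y = (if k = 1 \<or> k = 2 then integral {-1..y} (alphaF F g k)
                           else - integral {y..1} (alphaF F g k))" for k y
  define K where "K = (\<Sum>k\<in>{3,4}. M$3$k / M$3$1 * integral {-1..1} (alphaF F g k))"
  have uF: "u k y = complex_of_real (F y $ 1 $ k) + \<i> * complex_of_real (F y $ 2 $ k)" if "y \<in> I" for k y
    using Fu'[OF that] by (simp add: complex_eq_iff)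
  have LFinv_eq: "LFinv F M g y = (\<Sum>k\<in>UNIV. u k y * of_real (c k y)) + u 1 y * of_real K" if "y \<in> I" for y
    unfolding LFinv_def Let_def c_def K_def using uF[OF that]
    by (simp add: sum_4 algebra_simps)
  have dc: "((c k) has_real_derivative alphaF F g k y) (at y)" if y: "y \<in> I" for k y
  proof (cases "k = 1 \<or> k = 2")
    case True
    define b where "b = (y + 1) / 2"
    have yb: "-1 < y" "y < b" "b < 1" using y by (auto simp: I_def b_def)
    have ib: "alphaF F g k integrable_on {-1..b}" using int1[of b k] yb True by auto
    have ca: "continuous (at y within {-1..b} - {}) (alphaF F g k)"
      using calpha[of k] y oI(1) continuous_on_eq_continuous_at continuous_at_imp_continuous_within by blast
    have "((\<lambda>t. integral {-1..t} (alphaF F g k)) has_vector_derivative alphaF F g k y) (at y within {-1..b} - {})"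
      by (rule integral_has_vector_derivative_continuous_at[OF ib _ _ ca]) (use yb in auto)
    hence "((\<lambda>t. integral {-1..t} (alphaF F g k)) has_vector_derivative alphaF F g k y) (at y)"
      using at_within_interior[of y "{-1..b}"] yb by simp
    thus ?thesis using True unfolding c_def has_real_derivative_iff_has_vector_derivative by simp
  next
    case False
    define a where "a = (y - 1) / 2"
    have ya: "-1 < a" "a < y" "y < 1" using y by (auto simp: I_def a_def)
    have ia: "alphaF F g k integrable_on {a..1}" using int2[of a k] ya False exhaust_4[of k] by auto
    have ca: "continuous (at y within {a..1} - {}) (alphaF F g k)"
      using calpha[of k] y oI(1) continuous_on_eq_continuous_at continuous_at_imp_continuous_within by blast
    have "((\<lambda>t. integral {a..t} (alphaF F g k)) has_vector_derivative alphaF F g k y) (at y within {a..1} - {})"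
      by (rule integral_has_vector_derivative_continuous_at[OF ia _ _ ca]) (use ya in auto)
    hence "((\<lambda>t. integral {a..t} (alphaF F g k)) has_vector_derivative alphaF F g k y) (at y)"
      using at_within_interior[of y "{a..1}"] ya by simp
    hence "((\<lambda>t. integral {a..t} (alphaF F g k) - integral {a..1} (alphaF F g k)) has_vector_derivative alphaF F g k y) (at y)"
      by (auto intro!: derivative_eq_intros)
    hence "(c k has_vector_derivative alphaF F g k y) (at y)"
    proof (rule has_vector_derivative_transform_within_open[where S = "{a<..<1}"])
      fix t assume t: "t \<in> {a<..<1}"
      have "integral {a..t} (alphaF F g k) + integral {t..1} (alphaF F g k) = integral {a..1} (alphaF F g k)"
        by (rule Henstock_Kurzweil_Integration.integral_combine) (use t ia in auto)
      thus "integral {a..t} (alphaF F g k) - integral {a..1} (alphaF F g k) = c k t"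
        using False unfolding c_def by simp
    qed (use ya in auto)
    thus ?thesis unfolding has_real_derivative_iff_has_vector_derivative .
  qed
  have cc: "continuous_on I (c k)" for k
    using DERIV_isCont[OF dc] by (intro continuous_at_imp_continuous_on ballI) auto
  have ids: "(\<Sum>k\<in>UNIV. u k y * of_real (alphaF F g k y)) = 0 \<and>
             (\<Sum>k\<in>UNIV. v k y * of_real (alphaF F g k y)) = g y" if y: "y \<in> I" for y
  proof -
    define Fi where "Fi = matrix_inv (F y)"
    have FFi: "F y ** Fi = mat 1" unfolding Fi_def by (rule minv_works) (use inv y in \<open>auto simp: I_def\<close>)
    have e: "(F y ** Fi) $ i $ j = (if i = j then 1 else 0)" for i j by (simp add: FFi mat_def)
    have e13: "F y$1$1 * Fi$1$3 + F y$1$2 * Fi$2$3 + F y$1$3 * Fi$3$3 + F y$1$4 * Fi$4$3 = 0"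
      using e[of 1 3] by (simp add: matmul_entry)
    have e14: "F y$1$1 * Fi$1$4 + F y$1$2 * Fi$2$4 + F y$1$3 * Fi$3$4 + F y$1$4 * Fi$4$4 = 0"
      using e[of 1 4] by (simp add: matmul_entry)
    have e23: "F y$2$1 * Fi$1$3 + F y$2$2 * Fi$2$3 + F y$2$3 * Fi$3$3 + F y$2$4 * Fi$4$3 = 0"
      using e[of 2 3] by (simp add: matmul_entry)
    have e24: "F y$2$1 * Fi$1$4 + F y$2$2 * Fi$2$4 + F y$2$3 * Fi$3$4 + F y$2$4 * Fi$4$4 = 0"
      using e[of 2 4] by (simp add: matmul_entry)
    have e33: "F y$3$1 * Fi$1$3 + F y$3$2 * Fi$2$3 + F y$3$3 * Fi$3$3 + F y$3$4 * Fi$4$3 = 1"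
      using e[of 3 3] by (simp add: matmul_entry)
    have e34: "F y$3$1 * Fi$1$4 + F y$3$2 * Fi$2$4 + F y$3$3 * Fi$3$4 + F y$3$4 * Fi$4$4 = 0"
      using e[of 3 4] by (simp add: matmul_entry)
    have e43: "F y$4$1 * Fi$1$3 + F y$4$2 * Fi$2$3 + F y$4$3 * Fi$3$3 + F y$4$4 * Fi$4$3 = 0"
      using e[of 4 3] by (simp add: matmul_entry)
    have e44: "F y$4$1 * Fi$1$4 + F y$4$2 * Fi$2$4 + F y$4$3 * Fi$3$4 + F y$4$4 * Fi$4$4 = 1"
      using e[of 4 4] by (simp add: matmul_entry)
    have al: "alphaF F g k y = Fi$k$3 * Re (g y) + Fi$k$4 * Im (g y)" for k
      by (simp add: alphaF_def Fi_def)
    have r1: "Re (\<Sum>k\<in>UNIV. u k y * of_real (alphaF F g k y)) =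
      Re (g y) * (F y$1$1 * Fi$1$3 + F y$1$2 * Fi$2$3 + F y$1$3 * Fi$3$3 + F y$1$4 * Fi$4$3)
      + Im (g y) * (F y$1$1 * Fi$1$4 + F y$1$2 * Fi$2$4 + F y$1$3 * Fi$3$4 + F y$1$4 * Fi$4$4)"
      by (simp add: sum_4 al Fu'[OF y, symmetric] algebra_simps)
    have i1: "Im (\<Sum>k\<in>UNIV. u k y * of_real (alphaF F g k y)) =
      Re (g y) * (F y$2$1 * Fi$1$3 + F y$2$2 * Fi$2$3 + F y$2$3 * Fi$3$3 + F y$2$4 * Fi$4$3)
      + Im (g y) * (F y$2$1 * Fi$1$4 + F y$2$2 * Fi$2$4 + F y$2$3 * Fi$3$4 + F y$2$4 * Fi$4$4)"
      by (simp add: sum_4 al Fu'[OF y, symmetric] algebra_simps)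
    have r2: "Re (\<Sum>k\<in>UNIV. v k y * of_real (alphaF F g k y)) =
      Re (g y) * (F y$3$1 * Fi$1$3 + F y$3$2 * Fi$2$3 + F y$3$3 * Fi$3$3 + F y$3$4 * Fi$4$3)
      + Im (g y) * (F y$3$1 * Fi$1$4 + F y$3$2 * Fi$2$4 + F y$3$3 * Fi$3$4 + F y$3$4 * Fi$4$4)"
      by (simp add: sum_4 al Fu'[OF y, symmetric] algebra_simps)
    have i2: "Im (\<Sum>k\<in>UNIV. v k y * of_real (alphaF F g k y)) =
      Re (g y) * (F y$4$1 * Fi$1$3 + F y$4$2 * Fi$2$3 + F y$4$3 * Fi$3$3 + F y$4$4 * Fi$4$3)
      + Im (g y) * (F y$4$1 * Fi$1$4 + F y$4$2 * Fi$2$4 + F y$4$3 * Fi$3$4 + F y$4$4 * Fi$4$4)"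
      by (simp add: sum_4 al Fu'[OF y, symmetric] algebra_simps)
    have "Re (\<Sum>k\<in>UNIV. u k y * of_real (alphaF F g k y)) = Re 0"
      unfolding r1 e13 e14 by simp
    moreover have "Im (\<Sum>k\<in>UNIV. u k y * of_real (alphaF F g k y)) = Im 0"
      unfolding i1 e23 e24 by simp
    moreover have "Re (\<Sum>k\<in>UNIV. v k y * of_real (alphaF F g k y)) = Re (g y)"
      unfolding r2 e33 e34 by simp
    moreover have "Im (\<Sum>k\<in>UNIV. v k y * of_real (alphaF F g k y)) = Im (g y)"
      unfolding i2 e43 e44 by simp
    ultimately show ?thesis by (metis complex_eqI)
  qed
  define D where "D y = (\<Sum>k\<in>UNIV. v k y * of_real (c k y)) + v 1 y * of_real K" for y
  define D' where "D' y = (\<Sum>k\<in>UNIV. w k y * of_real (c k y)) + w 1 y * of_real K + g y" for y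
  have dL: "(LFinv F M g has_vector_derivative D y) (at y)" if y: "y \<in> I" for y
  proof -
    have "((\<lambda>t. (\<Sum>k\<in>UNIV. u k t * of_real (c k t)) + u 1 t * of_real K) has_vector_derivative
          (\<Sum>k\<in>UNIV. u k y * of_real (alphaF F g k y) + v k y * of_real (c k y)) + (u 1 y * 0 + v 1 y * of_real K)) (at y)"
      by (intro derivative_intros du dc has_vector_derivative_mult has_vector_derivative_of_real)
         (use y in \<open>auto simp: I_def\<close>)
    hence "((\<lambda>t. (\<Sum>k\<in>UNIV. u k t * of_real (c k t)) + u 1 t * of_real K) has_vector_derivative D y) (at y)"
      using ids[OF y] by (simp add: D_def sum.distrib)
    thus ?thesis
      by (rule has_vector_derivative_transform_within_open[OF _ oI(1) y]) (simp add: LFinv_eq)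
  qed
  have dD: "(D has_vector_derivative D' y) (at y)" if y: "y \<in> I - {0}" for y
  proof -
    have yI: "y \<in> I" using y by auto
    have "((\<lambda>t. (\<Sum>k\<in>UNIV. v k t * of_real (c k t)) + v 1 t * of_real K) has_vector_derivative
          (\<Sum>k\<in>UNIV. v k y * of_real (alphaF F g k y) + w k y * of_real (c k y)) + (v 1 y * 0 + w 1 y * of_real K)) (at y)"
      by (intro derivative_intros dv dc[OF yI] has_vector_derivative_mult has_vector_derivative_of_real)
         (use y in \<open>auto simp: I_def\<close>)
    moreover have "D = (\<lambda>t. (\<Sum>k\<in>UNIV. v k t * of_real (c k t)) + v 1 t * of_real K)"
      by (simp add: D_def fun_eq_iff)
    ultimately show ?thesis
      using ids[OF yI] by (simp add: D'_def sum.distrib algebra_simps)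
  qed
  have cD: "continuous_on I D" unfolding D_def
    by (intro continuous_intros cc) (use cv in \<open>auto simp: I_def\<close>)
  have cD': "continuous_on (I - {0}) D'" unfolding D'_def
    by (intro continuous_intros continuous_on_subset[OF cc] continuous_on_subset[OF cgI])
       (use cw in \<open>auto simp: I_def\<close>)
  have vdL: "vector_derivative (LFinv F M g) (at y) = D y" if "y \<in> I" for y
    using dL[OF that] by (rule vector_derivative_at)
  have C1: "LFinv F M g C1_differentiable_on I"
    unfolding C1_differentiable_on_def using dL cD by blast
  have C1': "LFinv F M g C1_differentiable_on (I - {0})"
    unfolding C1_differentiable_on_def using dL continuous_on_subset[OF cD] by blast
  have dvdL: "((\<lambda>t. vector_derivative (LFinv F M g) (at t)) has_vector_derivative D' y) (at y)"
    if y: "y \<in> I - {0}" for y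
    by (rule has_vector_derivative_transform_within_open[OF dD[OF y] oI(1)]) (use y vdL in auto)
  have C2': "(\<lambda>t. vector_derivative (LFinv F M g) (at t)) C1_differentiable_on (I - {0})"
    unfolding C1_differentiable_on_def using dvdL cD' by blast
  have LFeq: "LF F (LFinv F M g) y = g y" if y: "y \<in> I - {0}" for y
  proof -
    have yI: "y \<in> I" using y by auto
    define Fd :: "real^4^4" where "Fd = (\<chi> j k. if j = 1 then Re (v k y) else if j = 2 then Im (v k y)
                              else if j = 3 then Re (w k y) else Im (w k y))"
    have vdF: "vector_derivative (\<lambda>t. F t $ j $ k) (at y) = Fd $ j $ k" for j k
    proof -
      have "j = 1 \<or> j = 2 \<or> j = 3 \<or> j = 4" by (rule exhaust_4)
      thus ?thesis
      proof (elim disjE)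
        assume j: "j = 1"
        have "((\<lambda>t. F t $ j $ k) has_vector_derivative Re (v k y)) (at y)"
          by (rule has_vector_derivative_transform_within_open[OF has_vd_Re[OF du] oI(1) yI])
             (use yI j Fu' in \<open>auto simp: I_def\<close>)
        thus ?thesis using j by (simp add: Fd_def vector_derivative_at)
      next
        assume j: "j = 2"
        have "((\<lambda>t. F t $ j $ k) has_vector_derivative Im (v k y)) (at y)"
          by (rule has_vector_derivative_transform_within_open[OF has_vd_Im[OF du] oI(1) yI])
             (use yI j Fu' in \<open>auto simp: I_def\<close>)
        thus ?thesis using j by (simp add: Fd_def vector_derivative_at)
      next
        assume j: "j = 3"
        have "((\<lambda>t. F t $ j $ k) has_vector_derivative Re (w k y)) (at y)"
          by (rule has_vector_derivative_transform_within_open[OF has_vd_Re[OF dv] oI(1) yI])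
             (use y j Fu' in \<open>auto simp: I_def\<close>)
        thus ?thesis using j by (simp add: Fd_def vector_derivative_at)
      next
        assume j: "j = 4"
        have "((\<lambda>t. F t $ j $ k) has_vector_derivative Im (w k y)) (at y)"
          by (rule has_vector_derivative_transform_within_open[OF has_vd_Im[OF dv] oI(1) yI])
             (use y j Fu' in \<open>auto simp: I_def\<close>)
        thus ?thesis using j by (simp add: Fd_def vector_derivative_at)
      qed
    qed
    have cA: "coefA F y = - (Fd ** matrix_inv (F y))"
      unfolding coefA_def using vdF by (simp add: vec_eq_iff)
    define A where "A = coefA F y"
    have FiF: "matrix_inv (F y) ** F y = mat 1" by (rule minv_works) (use inv yI in \<open>auto simp: I_def\<close>)
    have AF: "A ** F y = - Fd"
    proof -
      have "A ** F y = - ((Fd ** matrix_inv (F y)) ** F y)"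
        unfolding A_def cA by (simp add: vec_eq_iff matrix_matrix_mult_def sum_negf)
      also have "\<dots> = - Fd" by (simp add: matrix_mul_assoc[symmetric] FiF)
      finally show ?thesis .
    qed
    have Z: "w k y + p1 F y * v k y + p2 F y * cnj (v k y) + q1 F y * u k y + q2 F y * cnj (u k y) = 0" for k
    proof -
      have r: "Re (w k y) = - (A$3$1 * Re (u k y) + A$3$2 * Im (u k y) + A$3$3 * Re (v k y) + A$3$4 * Im (v k y))"
        using arg_cong[OF AF, of "\<lambda>X. X $ 3 $ k"] Fu'[OF yI] by (simp add: matmul_entry Fd_def)
      have i: "Im (w k y) = - (A$4$1 * Re (u k y) + A$4$2 * Im (u k y) + A$4$3 * Re (v k y) + A$4$4 * Im (v k y))"
        using arg_cong[OF AF, of "\<lambda>X. X $ 4 $ k"] Fu'[OF yI] by (simp add: matmul_entry Fd_def)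
      show ?thesis
        apply (simp add: complex_eq_iff p1_def p2_def q1_def q2_def Let_def A_def[symmetric] r i algebra_simps)
        apply (intro conjI)
         apply (simp add: field_simps)
        apply (simp add: field_simps)
        done
    qed
    have "LF F (LFinv F M g) y = D' y + p1 F y * D y + p2 F y * cnj (D y) + q1 F y * LFinv F M g y
        + q2 F y * cnj (LFinv F M g y)"
      unfolding LF_def using vdL[OF yI] dvdL[OF y] by (simp add: vector_derivative_at)
    also have "\<dots> = (\<Sum>k\<in>UNIV. of_real (c k y) * (w k y + p1 F y * v k y + p2 F y * cnj (v k y) + q1 F y * u k y + q2 F y * cnj (u k y)))
        + of_real K * (w 1 y + p1 F y * v 1 y + p2 F y * cnj (v 1 y) + q1 F y * u 1 y + q2 F y * cnj (u 1 y)) + g y"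
      by (simp add: D_def D'_def LFinv_eq[OF yI] sum_4 algebra_simps)
    also have "\<dots> = g y" by (simp add: Z)
    finally show ?thesis .
  qed
  show ?thesis using C1 C1' C2' LFeq unfolding C2_on_def I_def by blast
qed


definition ccf :: "real \<Rightarrow> complex" where "ccf al = (of_real al + \<i>) / (2 * of_real al)"
definition ddf :: "real \<Rightarrow> complex" where "ddf al = (2 * of_real al - \<i>) / (2 * of_real al)"
definition phiC :: "real \<Rightarrow> complex \<Rightarrow> complex" where
  "phiC al z = - 2 * of_real al / (1 - z)^2 + 2 * of_real al / (1 - z) - 2 / of_real al * ln (1 - z)"
definition phiD :: "real \<Rightarrow> complex \<Rightarrow> complex" where
  "phiD al z = - 4 * of_real al / (1 - z)^3 + 2 * of_real al / (1 - z)^2 + 2 / (of_real al * (1 - z))"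
definition EC :: "real \<Rightarrow> complex \<Rightarrow> complex" where "EC al z = exp (\<i> * phiC al z)"
definition EC' :: "real \<Rightarrow> complex \<Rightarrow> complex" where "EC' al z = exp (- \<i> * phiC al z)"
definition Rp :: "(4 \<Rightarrow> complex poly) \<Rightarrow> real \<Rightarrow> 4 \<Rightarrow> complex \<Rightarrow> complex" where
  "Rp P al k z = (if k = 1 then 1 + ccf al * (1 - z) + (1 - z)^2 * poly (P 1) z
                 else \<i> + \<i> * ccf al * (1 - z) + (1 - z)^2 * poly (P 2) z)"
definition Ap :: "(4 \<Rightarrow> complex poly) \<Rightarrow> real \<Rightarrow> 4 \<Rightarrow> complex \<Rightarrow> complex" where
  "Ap P al k z = 1 + ddf al * (1 - z) + (1 - z)^2 * poly (P k) z"
definition Sp :: "(4 \<Rightarrow> complex poly) \<Rightarrow> real \<Rightarrow> 4 \<Rightarrow> complex \<Rightarrow> complex" where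
  "Sp P al k z = (1 - z) * Ap P al k z"
definition Tp :: "(4 \<Rightarrow> complex poly) \<Rightarrow> 4 \<Rightarrow> complex \<Rightarrow> complex" where
  "Tp Q k z = (1 - z)^5 * poly (Q k) z"
definition fRC :: "(4 \<Rightarrow> complex poly) \<Rightarrow> (4 \<Rightarrow> complex poly) \<Rightarrow> real \<Rightarrow> 4 \<Rightarrow> complex \<Rightarrow> complex" where
  "fRC P Q al k z = (if k = 1 \<or> k = 2 then Rp P al k z
      else if k = 3 then EC al z * Sp P al 3 z + EC' al z * Tp Q 3 z
      else \<i> * EC al z * Sp P al 4 z + \<i> * EC' al z * Tp Q 4 z)"
definition gLC :: "(4 \<Rightarrow> complex poly) \<Rightarrow> 4 \<Rightarrow> complex \<Rightarrow> complex" where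
  "gLC PL k z = (if k = 1 then 1 + (1 + z) * poly (PL 1) z
     else if k = 2 then \<i> + (1 + z) * poly (PL 2) z
     else if k = 3 then 1 / (1 + z) * (1 + (1 + z) * poly (PL 3) z)
     else \<i> / (1 + z) * (1 + (1 + z) * poly (PL 4) z))"

lemma gL_eq: "gL PL k y = gLC PL k (of_real y)"
  by (simp add: gL_def gLC_def Let_def)

lemma phi_eq: "y < 1 \<Longrightarrow> complex_of_real (phi y al) = phiC al (of_real y)"
  by (simp add: phi_def phiC_def Ln_of_real[symmetric])

lemma fR_eq: "y < 1 \<Longrightarrow> fR P Q al k y = fRC P Q al k (of_real y)"
  by (simp add: fR_def fRC_def Let_def phi_eq EC_def EC'_def Rp_def Sp_def Ap_def Tp_def ccf_def ddf_def
      algebra_simps)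

lemma phiC_deriv:
  assumes z: "Re z < 1" and al: "al \<noteq> 0"
  shows "(phiC al has_field_derivative phiD al z) (at z)"
proof -
  have nz: "1 - z \<noteq> 0" and nz1: "z \<noteq> 1" using z by auto
  have nr: "1 - z \<notin> \<real>\<^sub>\<le>\<^sub>0" using z by (auto simp: nonpos_Reals_def dest!: arg_cong[where f=Re])
  have aux: "\<And>w::complex. w \<noteq> 0 \<Longrightarrow> (0 * w\<^sup>2 + 2 * complex_of_real al * (2 * ((0 - 1) * w))) / w ^ 4 +
     (0 * w - 2 * complex_of_real al * (0 - 1)) / (w * w) -
     (0 * Ln w + inverse w * (0 - 1) * 2 / complex_of_real al) =
     2 * complex_of_real al / w\<^sup>2 - 4 * complex_of_real al / w ^ 3 + 2 / (complex_of_real al * w)"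
    using al by (simp add: field_simps eval_nat_numeral)
  show ?thesis unfolding phiC_def phiD_def
    apply (intro derivative_eq_intros)
    apply (simp_all add: nz1 nr)
    apply (rule aux[OF nz])
    done
qed


lemma EC_deriv:
  assumes "Re z < 1" "al \<noteq> 0"
  shows "(EC al has_field_derivative \<i> * phiD al z * EC al z) (at z)"
  unfolding EC_def using phiC_deriv[OF assms]
  by (auto intro!: derivative_eq_intros)

lemma EC'_deriv:
  assumes "Re z < 1" "al \<noteq> 0"
  shows "(EC' al has_field_derivative - \<i> * phiD al z * EC' al z) (at z)"
  unfolding EC'_def using phiC_deriv[OF assms]
  by (auto intro!: derivative_eq_intros)

lemma poly_holo [holomorphic_intros]: "poly p holomorphic_on S"
  unfolding holomorphic_on_def field_differentiable_def
  using poly_DERIV has_field_derivative_at_within by blast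

lemma openS1: "open {z::complex. Re z < 1}"
  by (simp add: open_halfspace_Re_lt)
lemma openS2: "open {z::complex. Re z > -1}"
  by (simp add: open_halfspace_Re_gt)

lemma EC_holo: "al \<noteq> 0 \<Longrightarrow> EC al holomorphic_on {z. Re z < 1}"
  using EC_deriv by (subst holomorphic_on_open[OF openS1]) blast
lemma EC'_holo: "al \<noteq> 0 \<Longrightarrow> EC' al holomorphic_on {z. Re z < 1}"
  using EC'_deriv by (subst holomorphic_on_open[OF openS1]) blast

lemma Sp_holo: "Sp P al k holomorphic_on S"
  unfolding Sp_def Ap_def by (intro holomorphic_intros)
lemma Tp_holo: "Tp Q k holomorphic_on S"
  unfolding Tp_def by (intro holomorphic_intros)
lemma Rp_holo: "Rp P al k holomorphic_on S"
  unfolding Rp_def by (cases "k = 1") (simp_all, (intro holomorphic_intros)+)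
lemma Ap_holo: "Ap P al k holomorphic_on S"
  unfolding Ap_def by (intro holomorphic_intros)

lemma fRC_holo: "al \<noteq> 0 \<Longrightarrow> fRC P Q al k holomorphic_on {z. Re z < 1}"
  unfolding fRC_def
  by (cases "k = 1 \<or> k = 2"; cases "k = 3")
     (simp_all, (intro holomorphic_intros EC_holo EC'_holo Sp_holo Tp_holo Rp_holo; simp)+)

lemma gLC_holo: "gLC PL k holomorphic_on {z. Re z > -1}"
proof -
  have nz: "1 + z \<noteq> 0" if "z \<in> {z. Re z > -1}" for z using that by (auto simp: complex_eq_iff)
  show ?thesis unfolding gLC_def
    by (cases "k = 1"; cases "k = 2"; cases "k = 3")
       (simp_all, (intro holomorphic_intros; use nz in simp)+)
qed

lemma holo_DERIV: "f holomorphic_on S \<Longrightarrow> open S \<Longrightarrow> z \<in> S \<Longrightarrow> (f has_field_derivative deriv f z) (at z)"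
  using holomorphic_derivI by blast

lemma fRC3_eq: "fRC P Q al 3 = (\<lambda>z. EC al z * Sp P al 3 z + EC' al z * Tp Q 3 z)"
  by (simp add: fRC_def fun_eq_iff)
lemma fRC4_eq: "fRC P Q al 4 = (\<lambda>z. \<i> * EC al z * Sp P al 4 z + \<i> * EC' al z * Tp Q 4 z)"
  by (simp add: fRC_def fun_eq_iff)

lemma fRC3_deriv:
  assumes "Re z < 1" "al \<noteq> 0"
  shows "deriv (fRC P Q al 3) z = EC al z * (\<i> * phiD al z * Sp P al 3 z + deriv (Sp P al 3) z)
     + EC' al z * (- \<i> * phiD al z * Tp Q 3 z + deriv (Tp Q 3) z)"
proof -
  have "(fRC P Q al 3 has_field_derivative EC al z * (\<i> * phiD al z * Sp P al 3 z + deriv (Sp P al 3) z)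
     + EC' al z * (- \<i> * phiD al z * Tp Q 3 z + deriv (Tp Q 3) z)) (at z)"
    unfolding fRC3_eq
    by (rule derivative_eq_intros EC_deriv[OF assms] EC'_deriv[OF assms]
           holo_DERIV[OF Sp_holo open_UNIV UNIV_I] holo_DERIV[OF Tp_holo open_UNIV UNIV_I] refl)+
       (simp add: algebra_simps)
  thus ?thesis by (rule DERIV_imp_deriv)
qed

lemma fRC4_deriv:
  assumes "Re z < 1" "al \<noteq> 0"
  shows "deriv (fRC P Q al 4) z = \<i> * EC al z * (\<i> * phiD al z * Sp P al 4 z + deriv (Sp P al 4) z)
     + \<i> * EC' al z * (- \<i> * phiD al z * Tp Q 4 z + deriv (Tp Q 4) z)"
proof -
  have "(fRC P Q al 4 has_field_derivative \<i> * EC al z * (\<i> * phiD al z * Sp P al 4 z + deriv (Sp P al 4) z)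
     + \<i> * EC' al z * (- \<i> * phiD al z * Tp Q 4 z + deriv (Tp Q 4) z)) (at z)"
    unfolding fRC4_eq
    by (rule derivative_eq_intros EC_deriv[OF assms] EC'_deriv[OF assms]
           holo_DERIV[OF Sp_holo open_UNIV UNIV_I] holo_DERIV[OF Tp_holo open_UNIV UNIV_I] refl)+
       (simp add: algebra_simps)
  thus ?thesis by (rule DERIV_imp_deriv)
qed


lemma glue_deriv:
  fixes f g :: "real \<Rightarrow> 'a::real_normed_vector"
  assumes f: "(f has_vector_derivative D) (at 0)" and g: "(g has_vector_derivative D) (at 0)" and e: "f 0 = g 0"
  shows "((\<lambda>t. if t \<le> 0 then f t else g t) has_vector_derivative D) (at 0)"
proof -
  let ?h = "\<lambda>t. if t \<le> 0 then f t else g t"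
  have 1: "(?h has_vector_derivative D) (at 0 within {..0})"
    by (rule has_vector_derivative_transform_within[OF has_vector_derivative_at_within[OF f], of 1]) auto
  have 2: "(?h has_vector_derivative D) (at 0 within {0..})"
    by (rule has_vector_derivative_transform_within[OF has_vector_derivative_at_within[OF g], of 1])
       (use e in auto)
  have "(?h has_vector_derivative D) (at 0 within ({..0} \<union> {0..}))"
    using 1 2 unfolding has_vector_derivative_def has_derivative_within by (auto simp: Lim_within_Un)
  moreover have "{..0::real} \<union> {0..} = UNIV" by auto
  ultimately show ?thesis by simp
qed

lemma cont_comp_of_real:
  "continuous_on S G \<Longrightarrow> (\<And>y. y \<in> T \<Longrightarrow> complex_of_real y \<in> S) \<Longrightarrow> continuous_on T (\<lambda>y. G (of_real y))"
  by (rule continuous_on_compose2[of S G T of_real]) auto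

lemma vd_gL: "y > -1 \<Longrightarrow> vector_derivative (gL PL j) (at y) = deriv (gLC PL j) (of_real y)"
proof -
  assume y: "y > -1"
  have "gL PL j = (\<lambda>y. gLC PL j (of_real y))" by (simp add: fun_eq_iff gL_eq)
  moreover have "gLC PL j field_differentiable at (of_real y)"
    by (rule holomorphic_on_imp_differentiable_at[OF gLC_holo openS2]) (use y in simp)
  ultimately show ?thesis by (simp add: vector_derivative_of_real_right)
qed

lemma hvd_of_real:
  assumes "G holomorphic_on S" "open S" "complex_of_real y \<in> S" "open T" "y \<in> T" "\<And>t. t \<in> T \<Longrightarrow> f t = G (of_real t)"
  shows "(f has_vector_derivative deriv G (of_real y)) (at y)"
proof -
  have "((\<lambda>t. G (of_real t)) has_vector_derivative deriv G (of_real y)) (at y)"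
    by (rule has_vector_derivative_real_field[OF holo_DERIV[OF assms(1-3)]])
  thus ?thesis by (rule has_vector_derivative_transform_within_open[OF _ assms(4,5)]) (use assms(6) in auto)
qed

lemma vd_fR: "y < 1 \<Longrightarrow> al \<noteq> 0 \<Longrightarrow> vector_derivative (fR P Q al k) (at y) = deriv (fRC P Q al k) (of_real y)"
  by (rule vector_derivative_at, rule hvd_of_real[OF fRC_holo openS1, where T = "{..<1}"]) (auto simp: fR_eq)

definition GLf :: "(4 \<Rightarrow> complex poly) \<Rightarrow> real^4^4 \<Rightarrow> 4 \<Rightarrow> complex \<Rightarrow> complex" where
  "GLf PL M k z = (\<Sum>j\<in>UNIV. of_real (M$j$k) * gLC PL j z)"

lemma GLf_holo: "GLf PL M k holomorphic_on {z. Re z > -1}"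
  unfolding GLf_def by (intro holomorphic_intros gLC_holo)

lemma GLf_deriv: "Re z > -1 \<Longrightarrow> deriv (GLf PL M k) z = (\<Sum>j\<in>UNIV. of_real (M$j$k) * deriv (gLC PL j) z)"
proof -
  assume z: "Re z > -1"
  have "(GLf PL M k has_field_derivative (\<Sum>j\<in>UNIV. of_real (M$j$k) * deriv (gLC PL j) z)) (at z)"
    unfolding GLf_def
    by (intro DERIV_sum DERIV_cmult holo_DERIV[OF gLC_holo openS2]) (use z in simp)
  thus ?thesis by (rule DERIV_imp_deriv)
qed

lemma FLM_entries:
  assumes y: "y > -1"
  shows "(FL PL y ** M) $ 1 $ k = Re (GLf PL M k (of_real y))"
        "(FL PL y ** M) $ 2 $ k = Im (GLf PL M k (of_real y))"
        "(FL PL y ** M) $ 3 $ k = Re (deriv (GLf PL M k) (of_real y))"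
        "(FL PL y ** M) $ 4 $ k = Im (deriv (GLf PL M k) (of_real y))"
  using y by (simp_all add: matrix_matrix_mult_def FL_def colvec_def GLf_def GLf_deriv vd_gL gL_eq
     Re_sum Im_sum mult.commute)

lemma FR_entries:
  assumes y: "y < 1" and al: "astar + a \<noteq> 0"
  shows "FR P Q astar y a $ 1 $ k = Re (fRC P Q (astar + a) k (of_real y))"
        "FR P Q astar y a $ 2 $ k = Im (fRC P Q (astar + a) k (of_real y))"
        "FR P Q astar y a $ 3 $ k = Re (deriv (fRC P Q (astar + a) k) (of_real y))"
        "FR P Q astar y a $ 4 $ k = Im (deriv (fRC P Q (astar + a) k) (of_real y))"
  using y al by (simp_all add: FR_def colvec_def fR_eq vd_fR)


lemma bdd_int:
  fixes f :: "real \<Rightarrow> real"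
  assumes c: "continuous_on {a<..<b} f" and B: "\<And>x. x \<in> {a<..<b} \<Longrightarrow> \<bar>f x\<bar> \<le> B"
  shows "f integrable_on {a..b}"
proof -
  have "(\<lambda>x. B) integrable_on {a..b}" by (rule integrable_const_ivl)
  hence cB: "(\<lambda>x. B) integrable_on {a<..<b}" by (simp add: integrable_on_Icc_iff_Ioo)
  have "f integrable_on {a<..<b}"
    by (rule measurable_bounded_by_integrable_imp_integrable[OF
          continuous_imp_measurable_on_sets_lebesgue[OF c] cB]) (use B in auto)
  thus ?thesis by (simp add: integrable_on_Icc_iff_Ioo)
qed

lemma int_from_left:
  fixes f :: "real \<Rightarrow> real"
  assumes c: "continuous_on {-1<..<1} f" and ev: "eventually (\<lambda>x. \<bar>f x\<bar> \<le> B) (at_right (-1))"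
    and y: "y \<in> {-1<..<1}"
  shows "f integrable_on {-1..y}"
proof -
  obtain b where b: "b > -1" "\<And>x. x > -1 \<Longrightarrow> x < b \<Longrightarrow> \<bar>f x\<bar> \<le> B"
    using ev eventually_at_right[of "-1::real" 0] by auto
  define b' where "b' = min b y"
  have b': "-1 < b'" "b' \<le> y" "b' \<le> b" using b y by (auto simp: b'_def)
  have i1: "f integrable_on {-1..b'}"
    by (rule bdd_int[where B = B], rule continuous_on_subset[OF c]) (use b' b y in auto)
  have i2: "f integrable_on {b'..y}"
    by (rule integrable_continuous_interval, rule continuous_on_subset[OF c]) (use b' y in auto)
  show ?thesis by (rule Henstock_Kurzweil_Integration.integrable_combine[OF _ _ i1 i2]) (use b' in auto)
qed

lemma int_from_right:
  fixes f :: "real \<Rightarrow> real"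
  assumes c: "continuous_on {-1<..<1} f" and ev: "eventually (\<lambda>x. \<bar>f x\<bar> \<le> B) (at_left 1)"
    and y: "y \<in> {-1<..<1}"
  shows "f integrable_on {y..1}"
proof -
  obtain b where b: "b < 1" "\<And>x. x > b \<Longrightarrow> x < 1 \<Longrightarrow> \<bar>f x\<bar> \<le> B"
    using ev eventually_at_left[of 0 "1::real"] by auto
  define b' where "b' = max b y"
  have b': "b' < 1" "y \<le> b'" "b \<le> b'" using b y by (auto simp: b'_def)
  have i1: "f integrable_on {b'..1}"
    by (rule bdd_int[where B = B], rule continuous_on_subset[OF c]) (use b' b y in auto)
  have i2: "f integrable_on {y..b'}"
    by (rule integrable_continuous_interval, rule continuous_on_subset[OF c]) (use b' y in auto)
  show ?thesis by (rule Henstock_Kurzweil_Integration.integrable_combine[OF _ _ i2 i1]) (use b' in auto)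
qed


lemma gLC12_eq: "gLC PL 1 = (\<lambda>z. 1 + (1 + z) * poly (PL 1) z)" "gLC PL 2 = (\<lambda>z. \<i> + (1 + z) * poly (PL 2) z)"
  by (simp_all add: gLC_def fun_eq_iff)

lemma gLC1_deriv: "deriv (gLC PL 1) z = poly (PL 1) z + (1 + z) * poly (pderiv (PL 1)) z"
  unfolding gLC12_eq
  apply (rule DERIV_imp_deriv)
  apply (auto intro!: derivative_eq_intros simp: algebra_simps)
  done
lemma gLC2_deriv: "deriv (gLC PL 2) z = poly (PL 2) z + (1 + z) * poly (pderiv (PL 2)) z"
  unfolding gLC12_eq
  apply (rule DERIV_imp_deriv)
  apply (auto intro!: derivative_eq_intros simp: algebra_simps)
  done

lemma gLC34_eq: "gLC PL 3 = (\<lambda>z. 1 / (1 + z) * (1 + (1 + z) * poly (PL 3) z))"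
   "gLC PL 4 = (\<lambda>z. \<i> / (1 + z) * (1 + (1 + z) * poly (PL 4) z))"
  by (simp_all add: gLC_def fun_eq_iff)

lemma gLC3_deriv:
  assumes "1 + z \<noteq> 0"
  shows "deriv (gLC PL 3) z = - 1 / (1 + z)^2 + poly (pderiv (PL 3)) z"
proof -
  have aux: "\<And>w a b::complex. w \<noteq> 0 \<Longrightarrow> (0 * w - (0 + 1)) / (w * w) * (1 + w * a) +
     (0 + ((0 + 1) * a + 1 * b * w)) / w = b - 1 / w\<^sup>2"
    by (simp add: field_simps power2_eq_square)
  have "(gLC PL 3 has_field_derivative - 1 / (1 + z)^2 + poly (pderiv (PL 3)) z) (at z)"
    unfolding gLC34_eq
    apply (intro derivative_eq_intros)
    apply (simp_all add: assms)
    apply (rule aux[OF assms])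
    done
  thus ?thesis by (rule DERIV_imp_deriv)
qed
lemma gLC4_deriv:
  assumes "1 + z \<noteq> 0"
  shows "deriv (gLC PL 4) z = - \<i> / (1 + z)^2 + \<i> * poly (pderiv (PL 4)) z"
proof -
  have aux: "\<And>w a b::complex. w \<noteq> 0 \<Longrightarrow> (0 * w - \<i> * (0 + 1)) / (w * w) * (1 + w * a) +
     (0 + ((0 + 1) * a + 1 * b * w)) * \<i> / w = \<i> * b - \<i> / w\<^sup>2"
    by (simp add: field_simps power2_eq_square)
  have "(gLC PL 4 has_field_derivative - \<i> / (1 + z)^2 + \<i> * poly (pderiv (PL 4)) z) (at z)"
    unfolding gLC34_eq
    apply (intro derivative_eq_intros)
    apply (simp_all add: assms)
    apply (rule aux[OF assms])
    done
  thus ?thesis by (rule DERIV_imp_deriv)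
qed
lemma inv_diag:
  fixes A H :: "real^4^4"
  assumes H: "\<And>i j. H$i$j = d i * A$i$j * d j" and dH: "det H \<noteq> 0" and d: "\<And>i. d i \<noteq> 0"
  shows "matrix_inv A $ k $ j = d k * matrix_inv H $ k $ j * d j" "det A \<noteq> 0"
proof -
  define Hi where "Hi = matrix_inv H"
  have HHi: "H ** Hi = mat 1" unfolding Hi_def by (rule minv_works[OF dH])
  define X :: "real^4^4" where "X = (\<chi> k j. d k * Hi $ k $ j * d j)"
  have "A ** X = mat 1"
  proof -
    have "(A ** X) $ i $ j = (mat 1 :: real^4^4) $ i $ j" for i j
    proof -
      have "(A ** X) $ i $ j = (H ** Hi) $ i $ j * d j / d i"
        using d[of i] by (simp add: matmul_entry X_def H field_simps)
      thus ?thesis by (simp add: HHi mat_def d)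
    qed
    thus ?thesis by (simp add: vec_eq_iff)
  qed
  from minv_unique[OF this] show "matrix_inv A $ k $ j = d k * matrix_inv H $ k $ j * d j" "det A \<noteq> 0"
    by (simp_all add: X_def Hi_def)
qed

lemma ev_bounded_inv:
  fixes Mf :: "'a \<Rightarrow> real^'n^'n"
  assumes lim: "\<And>i j. ((\<lambda>x. Mf x $i$j) \<longlongrightarrow> L$i$j) F" and dL: "det L \<noteq> 0"
  shows "\<exists>B. eventually (\<lambda>x. det (Mf x) \<noteq> 0 \<and> (\<forall>k j. \<bar>matrix_inv (Mf x) $ k $ j\<bar> \<le> B)) F"
proof -
  define B where "B = (\<Sum>k\<in>UNIV. \<Sum>j\<in>UNIV. \<bar>matrix_inv L $ k $ j\<bar>) + 1"
  have ev1: "eventually (\<lambda>x. det (Mf x) \<noteq> 0) F"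
    using det_tendsto[OF lim] dL by (rule tendsto_imp_eventually_ne)
  have "eventually (\<lambda>x. \<bar>matrix_inv (Mf x) $ k $ j\<bar> \<le> B) F" for k j
  proof -
    have t: "((\<lambda>x. matrix_inv (Mf x) $ k $ j) \<longlongrightarrow> matrix_inv L $ k $ j) F"
      by (rule minv_tendsto[OF lim dL])
    have "eventually (\<lambda>x. dist (matrix_inv (Mf x) $ k $ j) (matrix_inv L $ k $ j) < 1) F"
      using t by (rule tendstoD) simp
    moreover have "\<bar>matrix_inv L $ k $ j\<bar> \<le> (\<Sum>k\<in>UNIV. \<Sum>j\<in>UNIV. \<bar>matrix_inv L $ k $ j\<bar>)"
    proof -
      have "\<bar>matrix_inv L $ k $ j\<bar> \<le> (\<Sum>j\<in>UNIV. \<bar>matrix_inv L $ k $ j\<bar>)"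
        by (rule member_le_sum) auto
      also have "\<dots> \<le> (\<Sum>k\<in>UNIV. \<Sum>j\<in>UNIV. \<bar>matrix_inv L $ k $ j\<bar>)"
        by (rule member_le_sum[where f = "\<lambda>k. \<Sum>j\<in>UNIV. \<bar>matrix_inv L $ k $ j\<bar>"]) (auto intro: sum_nonneg)
      finally show ?thesis .
    qed
    ultimately show ?thesis
      by (elim eventually_mono) (auto simp: B_def dist_real_def)
  qed
  hence "eventually (\<lambda>x. \<forall>j. \<bar>matrix_inv (Mf x) $ k $ j\<bar> \<le> B) F" for k
    by (rule eventually_all_finite)
  hence ev2: "eventually (\<lambda>x. \<forall>k j. \<bar>matrix_inv (Mf x) $ k $ j\<bar> \<le> B) F"
    by (rule eventually_all_finite)
  have "eventually (\<lambda>x. det (Mf x) \<noteq> 0 \<and> (\<forall>k j. \<bar>matrix_inv (Mf x) $ k $ j\<bar> \<le> B)) F"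
    by (rule eventually_conj[OF ev1 ev2])
  thus ?thesis by (rule exI[where x = B])
qed



definition hcC :: "(4 \<Rightarrow> complex poly) \<Rightarrow> 4 \<Rightarrow> real \<Rightarrow> complex" where
  "hcC PL j y = (let z = complex_of_real y; t = 1 + z in
     if j = 1 then 1 + t * poly (PL 1) z else if j = 2 then \<i> + t * poly (PL 2) z
     else if j = 3 then 1 + t * poly (PL 3) z else \<i> + \<i> * t * poly (PL 4) z)"
definition hcD :: "(4 \<Rightarrow> complex poly) \<Rightarrow> 4 \<Rightarrow> real \<Rightarrow> complex" where
  "hcD PL j y = (let z = complex_of_real y; t = 1 + z in
     if j = 1 then t * (poly (PL 1) z + t * poly (pderiv (PL 1)) z)
     else if j = 2 then t * (poly (PL 2) z + t * poly (pderiv (PL 2)) z)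
     else if j = 3 then -1 + t^2 * poly (pderiv (PL 3)) z
     else - \<i> + \<i> * t^2 * poly (pderiv (PL 4)) z)"
definition Hc :: "(4 \<Rightarrow> complex poly) \<Rightarrow> real \<Rightarrow> real^4^4" where
  "Hc PL y = (\<chi> i j. if i = 1 then Re (hcC PL j y) else if i = 2 then Im (hcC PL j y)
                      else if i = 3 then Re (hcD PL j y) else Im (hcD PL j y))"
definition ds :: "real \<Rightarrow> 4 \<Rightarrow> real" where
  "ds y i = (if i = 1 \<or> i = 2 then 1 else 1 + y)"

lemma hcC_eq: "y > -1 \<Longrightarrow> hcC PL j y = of_real (ds y j) * gLC PL j (of_real y)"
proof -
  assume y: "y > -1"
  define z where "z = complex_of_real y"
  have nz: "1 + z \<noteq> 0" using y by (simp add: complex_eq_iff z_def)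
  have c: "complex_of_real (1 + y) = 1 + z" by (simp add: z_def)
  have "j = 1 \<or> j = 2 \<or> j = 3 \<or> j = 4" by (rule exhaust_4)
  thus ?thesis
  proof (elim disjE)
    assume "j = 1" thus ?thesis by (simp add: hcC_def ds_def gLC_def z_def[symmetric])
  next
    assume "j = 2" thus ?thesis by (simp add: hcC_def ds_def gLC_def z_def[symmetric])
  next
    assume j: "j = 3"
    have "(1 + z) * (1 / (1 + z) * (1 + (1 + z) * poly (PL 3) z)) = 1 + (1 + z) * poly (PL 3) z"
      using nz by simp
    thus ?thesis using j by (simp add: hcC_def ds_def gLC_def z_def[symmetric] c del: of_real_add)
  next
    assume j: "j = 4"
    have e: "(1 + z) * (\<i> / (1 + z) * X) = \<i> * X" for X using nz by simp
    have "(1 + z) * (\<i> / (1 + z) * (1 + (1 + z) * poly (PL 4) z)) = \<i> + \<i> * (1 + z) * poly (PL 4) z"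
      unfolding e by (simp add: algebra_simps)
    thus ?thesis using j by (simp add: hcC_def ds_def gLC_def z_def[symmetric] c del: of_real_add)
  qed
qed

lemma hcD_eq: "y > -1 \<Longrightarrow> hcD PL j y = of_real (ds y j) * deriv (gLC PL j) (of_real y) * of_real (1 + y)"
proof -
  assume y: "y > -1"
  define z where "z = complex_of_real y"
  have nz: "1 + z \<noteq> 0" using y by (simp add: complex_eq_iff z_def)
  have c: "complex_of_real (1 + y) = 1 + z" by (simp add: z_def)
  have e: "\<And>w X::complex. w \<noteq> 0 \<Longrightarrow> w * (- 1 / w^2 + X) * w = -1 + w^2 * X"
    by (simp add: field_simps power2_eq_square)
  have e': "\<And>w X::complex. w \<noteq> 0 \<Longrightarrow> w * (- \<i> / w^2 + \<i> * X) * w = - \<i> + \<i> * w^2 * X"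
    by (simp add: field_simps power2_eq_square)
  have "j = 1 \<or> j = 2 \<or> j = 3 \<or> j = 4" by (rule exhaust_4)
  thus ?thesis
  proof (elim disjE)
    assume "j = 1" thus ?thesis
      by (simp add: hcD_def ds_def gLC1_deriv z_def[symmetric] c del: of_real_add) (simp add: algebra_simps)
  next
    assume "j = 2" thus ?thesis
      by (simp add: hcD_def ds_def gLC2_deriv z_def[symmetric] c del: of_real_add) (simp add: algebra_simps)
  next
    assume j: "j = 3" 
    show ?thesis using j e[OF nz, of "poly (pderiv (PL 3)) z"]
      by (simp add: hcD_def ds_def gLC3_deriv[OF nz] z_def[symmetric] c del: of_real_add)
  next
    assume j: "j = 4" 
    show ?thesis using j e'[OF nz, of "poly (pderiv (PL 4)) z"]
      by (simp add: hcD_def ds_def gLC4_deriv[OF nz] z_def[symmetric] c del: of_real_add)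
  qed
qed

lemma FL_ent:
  assumes "y > -1"
  shows "FL PL y $ 1 $ j = Re (gLC PL j (of_real y))" "FL PL y $ 2 $ j = Im (gLC PL j (of_real y))"
        "FL PL y $ 3 $ j = Re (deriv (gLC PL j) (of_real y))" "FL PL y $ 4 $ j = Im (deriv (gLC PL j) (of_real y))"
  using assms by (simp_all add: FL_def colvec_def gL_eq vd_gL)

lemma Hc_ent: "Hc PL y $ 1 $ j = Re (hcC PL j y)" "Hc PL y $ 2 $ j = Im (hcC PL j y)"
   "Hc PL y $ 3 $ j = Re (hcD PL j y)" "Hc PL y $ 4 $ j = Im (hcD PL j y)"
  by (simp_all add: Hc_def)

lemma ds12: "ds y 1 = 1" "ds y 2 = 1" "ds y 3 = 1 + y" "ds y 4 = 1 + y"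
  by (simp_all add: ds_def)

lemma Hc_eq: "y > -1 \<Longrightarrow> Hc PL y $ i $ j = ds y i * FL PL y $ i $ j * ds y j"
proof -
  assume y: "y > -1"
  have "i = 1 \<or> i = 2 \<or> i = 3 \<or> i = 4" by (rule exhaust_4)
  thus ?thesis
  proof (elim disjE)
    assume "i = 1" thus ?thesis
      by (simp only: Hc_ent FL_ent[OF y] hcC_eq[OF y] ds12) simp
  next
    assume "i = 2" thus ?thesis
      by (simp only: Hc_ent FL_ent[OF y] hcC_eq[OF y] ds12) simp
  next
    assume "i = 3" thus ?thesis
      by (simp only: Hc_ent FL_ent[OF y] hcD_eq[OF y] ds12) (simp add: mult.commute)
  next
    assume "i = 4" thus ?thesis
      by (simp only: Hc_ent FL_ent[OF y] hcD_eq[OF y] ds12) (simp add: mult.commute)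
  qed
qed

lemma hcC_cont: "continuous_on UNIV (hcC PL j)"
proof -
  have "j = 1 \<or> j = 2 \<or> j = 3 \<or> j = 4" by (rule exhaust_4)
  thus ?thesis unfolding hcC_def[abs_def] Let_def apply (elim disjE) apply simp_all apply (rule continuous_intros | simp)+ done
qed
lemma hcD_cont: "continuous_on UNIV (hcD PL j)"
proof -
  have "j = 1 \<or> j = 2 \<or> j = 3 \<or> j = 4" by (rule exhaust_4)
  thus ?thesis unfolding hcD_def[abs_def] Let_def apply (elim disjE) apply simp_all apply (rule continuous_intros | simp)+ done
qed

lemma Hc_cont: "continuous_on UNIV (\<lambda>y. Hc PL y $ i $ j)"
proof -
  have "i = 1 \<or> i = 2 \<or> i = 3 \<or> i = 4" by (rule exhaust_4)
  thus ?thesis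
    apply (elim disjE) apply (simp_all add: Hc_ent) apply (rule continuous_intros hcC_cont hcD_cont)+ done
qed

lemma hc_at: "hcC PL 1 (-1) = 1" "hcC PL 2 (-1) = \<i>" "hcC PL 3 (-1) = 1" "hcC PL 4 (-1) = \<i>"
  "hcD PL 1 (-1) = 0" "hcD PL 2 (-1) = 0" "hcD PL 3 (-1) = -1" "hcD PL 4 (-1) = - \<i>"
  by (simp_all add: hcC_def hcD_def)

lemma H0_inv: "Hc PL (-1) ** Hc PL (-1) = mat 1"
proof -
  have "(Hc PL (-1) ** Hc PL (-1)) $ i $ j = mat 1 $ i $ j" for i j
  proof -
    have "i = 1 \<or> i = 2 \<or> i = 3 \<or> i = 4" "j = 1 \<or> j = 2 \<or> j = 3 \<or> j = 4" by (rule exhaust_4)+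
    thus ?thesis by (elim disjE) (simp_all add: matmul_entry Hc_ent hc_at mat_def)
  qed
  thus ?thesis by (simp add: vec_eq_iff)
qed


lemma cont_tendsto_within: "continuous_on UNIV (f::real \<Rightarrow> real) \<Longrightarrow> (f \<longlongrightarrow> f x) (at x within S)"
proof -
  assume c: "continuous_on UNIV f"
  have "isCont f x" using c by (simp add: continuous_on_eq_continuous_at)
  hence "(f \<longlongrightarrow> f x) (at x)" by (simp add: isCont_def)
  thus ?thesis by (rule tendsto_within_subset) simp
qed

lemma sum_prod_bound:
  fixes a b :: "'i \<Rightarrow> real"
  assumes "finite I" "\<And>m. m \<in> I \<Longrightarrow> \<bar>b m\<bar> \<le> c"
  shows "\<bar>\<Sum>m\<in>I. a m * b m\<bar> \<le> (\<Sum>m\<in>I. \<bar>a m\<bar>) * c"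
proof -
  have "\<bar>\<Sum>m\<in>I. a m * b m\<bar> \<le> (\<Sum>m\<in>I. \<bar>a m * b m\<bar>)" by (rule sum_abs)
  also have "\<dots> \<le> (\<Sum>m\<in>I. \<bar>a m\<bar> * c)"
    by (rule sum_mono) (simp add: abs_mult assms(2) mult_left_mono)
  also have "\<dots> = (\<Sum>m\<in>I. \<bar>a m\<bar>) * c" by (simp add: sum_distrib_right)
  finally show ?thesis .
qed

lemma row_sum_le: "(\<Sum>m\<in>UNIV. \<bar>(A::real^'n^'n) $ k $ m\<bar>) \<le> (\<Sum>k\<in>UNIV. \<Sum>m\<in>UNIV. \<bar>A $ k $ m\<bar>)"
  by (rule member_le_sum[where f = "\<lambda>k. \<Sum>m\<in>UNIV. \<bar>A $ k $ m\<bar>"]) (auto intro: sum_nonneg)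

lemma minv_prod:
  fixes A B :: "real^'n^'n"
  assumes "det A \<noteq> 0" "det B \<noteq> 0"
  shows "matrix_inv (A ** B) = matrix_inv B ** matrix_inv A"
proof (rule minv_unique)
  have "(A ** B) ** (matrix_inv B ** matrix_inv A) = A ** (B ** matrix_inv B) ** matrix_inv A"
    by (simp add: matrix_mul_assoc)
  also have "\<dots> = mat 1" by (simp add: minv_works assms)
  finally show "(A ** B) ** (matrix_inv B ** matrix_inv A) = mat 1" .
qed

lemma left_bound:
  fixes M :: "real^4^4" assumes dM: "det M \<noteq> 0"
  shows "\<exists>C. eventually (\<lambda>x. \<forall>k. \<bar>matrix_inv (FL PL x ** M) $ k $ 3\<bar> \<le> C * (1 + x) \<and>
                                \<bar>matrix_inv (FL PL x ** M) $ k $ 4\<bar> \<le> C * (1 + x)) (at_right (-1))"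
proof -
  have lim: "((\<lambda>y. Hc PL y $ i $ j) \<longlongrightarrow> Hc PL (-1) $ i $ j) (at_right (-1))" for i j
    by (rule cont_tendsto_within[OF Hc_cont])
  have d0: "det (Hc PL (-1)) \<noteq> 0" using minv_unique(2)[OF H0_inv] .
  obtain B where evB: "eventually (\<lambda>x. det (Hc PL x) \<noteq> 0 \<and> (\<forall>k j. \<bar>matrix_inv (Hc PL x) $ k $ j\<bar> \<le> B)) (at_right (-1))"
    using ev_bounded_inv[OF lim d0] by (rule exE)
  have evI: "eventually (\<lambda>x. x \<in> {-1<..<0}) (at_right (-1::real))" by (rule eventually_at_right_real) simp
  define Mi where "Mi = matrix_inv M"
  define S where "S = (\<Sum>k\<in>UNIV. \<Sum>m\<in>UNIV. \<bar>Mi $ k $ m\<bar>)"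
  have "eventually (\<lambda>x. \<forall>k. \<bar>matrix_inv (FL PL x ** M) $ k $ 3\<bar> \<le> (S * B) * (1 + x) \<and>
                                \<bar>matrix_inv (FL PL x ** M) $ k $ 4\<bar> \<le> (S * B) * (1 + x)) (at_right (-1))"
    using evB evI
  proof eventually_elim
    case (elim x)
    have x: "-1 < x" "x < 0" using elim by auto
    have dsn: "ds x i \<noteq> 0" for i using x by (simp add: ds_def)
    have dsb: "\<bar>ds x i\<bar> \<le> 1" for i using x by (simp add: ds_def)
    have Hx: "Hc PL x $ i $ j = ds x i * FL PL x $ i $ j * ds x j" for i j by (rule Hc_eq) (use x in simp)
    note ID = inv_diag[of "Hc PL x" "ds x" "FL PL x", OF Hx _ dsn]
    have dFL: "det (FL PL x) \<noteq> 0" using ID(2) elim by simp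
    have FLi: "\<bar>matrix_inv (FL PL x) $ m $ j\<bar> \<le> B * (1 + x)" if "j = 3 \<or> j = 4" for m j
    proof -
      have "matrix_inv (FL PL x) $ m $ j = ds x m * matrix_inv (Hc PL x) $ m $ j * (1 + x)"
        using ID(1)[of m j] elim that by (auto simp: ds_def)
      hence "\<bar>matrix_inv (FL PL x) $ m $ j\<bar> = \<bar>ds x m\<bar> * \<bar>matrix_inv (Hc PL x) $ m $ j\<bar> * (1 + x)"
        using x by (simp add: abs_mult)
      also have "\<dots> \<le> 1 * B * (1 + x)"
        using dsb[of m] elim x by (intro mult_right_mono mult_mono) auto
      finally show ?thesis by simp
    qed
    have inv: "matrix_inv (FL PL x ** M) = Mi ** matrix_inv (FL PL x)"
      unfolding Mi_def by (rule minv_prod[OF dFL dM])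
    have bnd: "\<bar>matrix_inv (FL PL x ** M) $ k $ j\<bar> \<le> (S * B) * (1 + x)" if "j = 3 \<or> j = 4" for k j
    proof -
      have "\<bar>matrix_inv (FL PL x ** M) $ k $ j\<bar> = \<bar>\<Sum>m\<in>UNIV. Mi $ k $ m * matrix_inv (FL PL x) $ m $ j\<bar>"
        unfolding inv by (simp add: matrix_matrix_mult_def)
      also have "\<dots> \<le> (\<Sum>m\<in>UNIV. \<bar>Mi $ k $ m\<bar>) * (B * (1 + x))"
        by (rule sum_prod_bound) (use FLi that in auto)
      also have "\<dots> \<le> S * (B * (1 + x))"
      proof (rule mult_right_mono)
        show "(\<Sum>m\<in>UNIV. \<bar>Mi $ k $ m\<bar>) \<le> S" unfolding S_def by (rule row_sum_le)
        have "0 \<le> B" using elim by (meson abs_ge_zero order_trans)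
        thus "0 \<le> B * (1 + x)" using x by simp
      qed
      finally show ?thesis by (simp add: mult.assoc)
    qed
    show ?case using bnd by auto
  qed
  thus ?thesis by (rule exI)
qed


lemma cont_tendsto_within': "continuous_on UNIV (f::real \<Rightarrow> 'b::topological_space) \<Longrightarrow> (f \<longlongrightarrow> f x) (at x within S)"
proof -
  assume c: "continuous_on UNIV f"
  have "isCont f x" using c by (simp add: continuous_on_eq_continuous_at)
  hence "(f \<longlongrightarrow> f x) (at x)" by (simp add: isCont_def)
  thus ?thesis by (rule tendsto_within_subset) simp
qed

lemma osc4:
  fixes X Y1 Y2 Y3 e1 e2 e3 :: "'a \<Rightarrow> complex"
  assumes "(X \<longlongrightarrow> L) F" "(Y1 \<longlongrightarrow> 0) F" "(Y2 \<longlongrightarrow> 0) F" "(Y3 \<longlongrightarrow> 0) F"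
    and ev: "eventually (\<lambda>x. norm (e1 x) \<le> 1 \<and> norm (e2 x) \<le> 1 \<and> norm (e3 x) \<le> 1) F"
  shows "((\<lambda>x. k * X x + e1 x * Y1 x + e2 x * Y2 x + e3 x * Y3 x) \<longlongrightarrow> k * L) F"
proof -
  have z: "((\<lambda>x. e x * Y x) \<longlongrightarrow> 0) F" if Y: "(Y \<longlongrightarrow> 0) F" and e: "eventually (\<lambda>x. norm (e x) \<le> 1) F"
    for e Y :: "'a \<Rightarrow> complex"
  proof (rule Lim_null_comparison)
    show "eventually (\<lambda>x. norm (e x * Y x) \<le> norm (Y x)) F"
      using e by eventually_elim (simp add: norm_mult mult_left_le_one_le)
    show "((\<lambda>x. norm (Y x)) \<longlongrightarrow> 0) F" using Y by (rule tendsto_norm_zero)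
  qed
  have e1: "eventually (\<lambda>x. norm (e1 x) \<le> 1) F" and e2: "eventually (\<lambda>x. norm (e2 x) \<le> 1) F"
    and e3: "eventually (\<lambda>x. norm (e3 x) \<le> 1) F" using ev by (auto elim: eventually_mono)
  have "((\<lambda>x. k * X x + e1 x * Y1 x + e2 x * Y2 x + e3 x * Y3 x) \<longlongrightarrow> k * L + 0 + 0 + 0) F"
    by (intro tendsto_add tendsto_mult_left assms(1) z[OF assms(2) e1] z[OF assms(3) e2] z[OF assms(4) e3])
  thus ?thesis by simp
qed

definition PhiP :: "real \<Rightarrow> complex \<Rightarrow> complex" where
  "PhiP al z = - 4 * of_real al + 2 * of_real al * (1 - z) + 2 * (1 - z)^2 / of_real al"

lemma phiD_PhiP: "z \<noteq> 1 \<Longrightarrow> al \<noteq> 0 \<Longrightarrow> (1 - z)^3 * phiD al z = PhiP al z"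
proof -
  assume z: "z \<noteq> 1" and al: "al \<noteq> 0"
  have s: "1 - z \<noteq> 0" using z by simp
  have "\<And>w::complex. w \<noteq> 0 \<Longrightarrow> w^3 * (- 4 * of_real al / w^3 + 2 * of_real al / w^2 + 2 / (of_real al * w))
      = - 4 * of_real al + 2 * of_real al * w + 2 * w^2 / of_real al"
    using al by (simp add: field_simps eval_nat_numeral)
  from this[OF s] show ?thesis by (simp add: phiD_def PhiP_def)
qed

lemma alg_val:
  fixes E E' A3 A4 q3 q4 s k :: complex and a b :: real
  assumes s: "s \<noteq> 0" and k: "(of_real a + \<i> * of_real b) * E = k"
  shows "(of_real a * (E * (s * A3) + E' * (s^5 * q3)) + of_real b * (\<i> * E * (s * A4) + \<i> * E' * (s^5 * q4))) / s
       = k * A3 + (of_real b * E) * (\<i> * (A4 - A3)) + (of_real a * E') * (s^4 * q3) + (of_real b * E') * (\<i> * (s^4 * q4))"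
proof -
  have "of_real a * (E * (s * A3) + E' * (s^5 * q3)) + of_real b * (\<i> * E * (s * A4) + \<i> * E' * (s^5 * q4))
      = s * (((of_real a + \<i> * of_real b) * E) * A3 + (of_real b * E) * (\<i> * (A4 - A3)) + (of_real a * E') * (s^4 * q3) + (of_real b * E') * (\<i> * (s^4 * q4)))"
    by (simp add: algebra_simps eval_nat_numeral)
  thus ?thesis using s k by simp
qed

lemma alg_der:
  fixes E E' A3 A4 q3 q4 s k ph Ph dS3 dS4 dT3 dT4 :: complex and a b :: real
  assumes k: "(of_real a + \<i> * of_real b) * E = k" and Ph: "s^3 * ph = Ph"
  shows "s^2 * (of_real a * (E * (\<i> * ph * (s * A3) + dS3) + E' * (- \<i> * ph * (s^5 * q3) + dT3))
             + of_real b * (\<i> * E * (\<i> * ph * (s * A4) + dS4) + \<i> * E' * (- \<i> * ph * (s^5 * q4) + dT4)))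
       = k * (\<i> * Ph * A3 + s^2 * dS3) + (of_real b * E) * (\<i> * (\<i> * Ph * (A4 - A3) + s^2 * (dS4 - dS3)))
         + (of_real a * E') * (- \<i> * Ph * (s^4 * q3) + s^2 * dT3)
         + (of_real b * E') * (\<i> * (- \<i> * Ph * (s^4 * q4) + s^2 * dT4))"
proof -
  have "s^2 * (of_real a * (E * (\<i> * ph * (s * A3) + dS3) + E' * (- \<i> * ph * (s^5 * q3) + dT3))
             + of_real b * (\<i> * E * (\<i> * ph * (s * A4) + dS4) + \<i> * E' * (- \<i> * ph * (s^5 * q4) + dT4)))
       = ((of_real a + \<i> * of_real b) * E) * (\<i> * (s^3 * ph) * A3 + s^2 * dS3) + (of_real b * E) * (\<i> * (\<i> * (s^3 * ph) * (A4 - A3) + s^2 * (dS4 - dS3)))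
         + (of_real a * E') * (- \<i> * (s^3 * ph) * (s^4 * q3) + s^2 * dT3)
         + (of_real b * E') * (\<i> * (- \<i> * (s^3 * ph) * (s^4 * q4) + s^2 * dT4))"
    by (simp add: algebra_simps eval_nat_numeral)
  thus ?thesis unfolding k Ph .
qed

lemma norm_EC: "y < 1 \<Longrightarrow> norm (EC al (of_real y)) = 1"
  by (simp add: EC_def phi_eq[symmetric])
lemma norm_EC': "y < 1 \<Longrightarrow> norm (EC' al (of_real y)) = 1"
proof -
  assume "y < 1"
  hence "EC' al (of_real y) = exp (\<i> * of_real (- phi y al))" by (simp add: EC'_def phi_eq[symmetric])
  thus ?thesis by (simp only: norm_exp_i_times)
qed


lemma cont_Ap: "continuous_on UNIV (\<lambda>y::real. Ap P al k (of_real y))"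
  unfolding Ap_def by (intro continuous_intros)
lemma cont_poly_of_real: "continuous_on UNIV (\<lambda>y::real. poly p (complex_of_real y))"
  by (intro continuous_intros)
lemma cont_dSp: "continuous_on UNIV (\<lambda>y::real. deriv (Sp P al k) (of_real y))"
  by (rule cont_comp_of_real[OF holomorphic_on_imp_continuous_on[OF holomorphic_deriv[OF Sp_holo open_UNIV]]]) auto
lemma cont_dTp: "continuous_on UNIV (\<lambda>y::real. deriv (Tp Q k) (of_real y))"
  by (rule cont_comp_of_real[OF holomorphic_on_imp_continuous_on[OF holomorphic_deriv[OF Tp_holo open_UNIV]]]) auto
lemma cont_PhiP: "al \<noteq> 0 \<Longrightarrow> continuous_on UNIV (\<lambda>y::real. PhiP al (of_real y))"
  unfolding PhiP_def by (intro continuous_intros) auto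

lemma right_lim:
  fixes w :: "real \<Rightarrow> complex"
  assumes al: "al \<noteq> 0"
   and ev: "eventually (\<lambda>y. w y * EC al (of_real y) = k \<and> norm (w y) \<le> 1) (at_left 1)"
  shows "((\<lambda>y. (of_real (Re (w y)) * fRC P Q al 3 (of_real y) + of_real (Im (w y)) * fRC P Q al 4 (of_real y))
              / of_real (1 - y)) \<longlongrightarrow> k) (at_left 1)" (is ?A)
    and "((\<lambda>y. of_real ((1 - y)^2) * (of_real (Re (w y)) * deriv (fRC P Q al 3) (of_real y)
              + of_real (Im (w y)) * deriv (fRC P Q al 4) (of_real y))) \<longlongrightarrow> k * (- 4 * \<i> * of_real al)) (at_left 1)" (is ?B)
proof -
  have evI: "eventually (\<lambda>y. y \<in> {0<..<1}) (at_left (1::real))" by (rule eventually_at_left_real) simp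
  define a where "a y = Re (w y)" for y
  define b where "b y = Im (w y)" for y
  define E where "E y = EC al (of_real y)" for y
  define E' where "E' y = EC' al (of_real y)" for y
  have wab: "of_real (a y) + \<i> * of_real (b y) = w y" for y by (simp add: a_def b_def complex_eq_iff)
  have nrm: "eventually (\<lambda>y. norm (of_real (b y) * E y) \<le> 1 \<and> norm (of_real (a y) * E' y) \<le> 1 \<and> norm (of_real (b y) * E' y) \<le> 1) (at_left 1)"
    using ev evI
  proof eventually_elim
    case (elim y)
    have "\<bar>a y\<bar> \<le> 1" "\<bar>b y\<bar> \<le> 1" using elim abs_Re_le_cmod abs_Im_le_cmod order_trans
      unfolding a_def b_def by fastforce+
    thus ?case using elim by (simp add: norm_mult E_def E'_def norm_EC norm_EC')
  qed
  have kk: "eventually (\<lambda>y. (of_real (a y) + \<i> * of_real (b y)) * E y = k) (at_left 1)"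
    using ev by eventually_elim (simp add: wab E_def)
  show ?A
  proof -
    have "((\<lambda>y. Ap P al 3 (of_real y)) \<longlongrightarrow> Ap P al 3 (of_real 1)) (at_left 1)"
      by (rule cont_tendsto_within'[OF cont_Ap])
    hence lX: "((\<lambda>y. Ap P al 3 (of_real y)) \<longlongrightarrow> 1) (at_left 1)" by (simp add: Ap_def)
    have "((\<lambda>y. \<i> * (Ap P al 4 (of_real y) - Ap P al 3 (of_real y))) \<longlongrightarrow>
            \<i> * (Ap P al 4 (of_real 1) - Ap P al 3 (of_real 1))) (at_left 1)"
      by (rule cont_tendsto_within') (intro continuous_intros cont_Ap)
    hence lY1: "((\<lambda>y. \<i> * (Ap P al 4 (of_real y) - Ap P al 3 (of_real y))) \<longlongrightarrow> 0) (at_left 1)"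
      by (simp add: Ap_def)
    have "((\<lambda>y. (1 - of_real y)^4 * poly (Q 3) (of_real y)) \<longlongrightarrow> (1 - of_real 1)^4 * poly (Q 3) (of_real 1 :: complex)) (at_left 1)"
      by (rule cont_tendsto_within') (intro continuous_intros)
    hence lY2: "((\<lambda>y. (1 - of_real y)^4 * poly (Q 3) (of_real y)) \<longlongrightarrow> (0::complex)) (at_left 1)" by simp
    have "((\<lambda>y. \<i> * ((1 - of_real y)^4 * poly (Q 4) (of_real y))) \<longlongrightarrow> \<i> * ((1 - of_real 1)^4 * poly (Q 4) (of_real 1 :: complex))) (at_left 1)"
      by (rule cont_tendsto_within') (intro continuous_intros)
    hence lY3: "((\<lambda>y. \<i> * ((1 - of_real y)^4 * poly (Q 4) (of_real y))) \<longlongrightarrow> (0::complex)) (at_left 1)" by simp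
    have lim: "((\<lambda>y. k * Ap P al 3 (of_real y) + (of_real (b y) * E y) * (\<i> * (Ap P al 4 (of_real y) - Ap P al 3 (of_real y)))
        + (of_real (a y) * E' y) * ((1 - of_real y)^4 * poly (Q 3) (of_real y))
        + (of_real (b y) * E' y) * (\<i> * ((1 - of_real y)^4 * poly (Q 4) (of_real y)))) \<longlongrightarrow> k * 1) (at_left 1)"
      by (rule osc4[OF lX lY1 lY2 lY3 nrm])
    have eq: "eventually (\<lambda>y. k * Ap P al 3 (of_real y) + (of_real (b y) * E y) * (\<i> * (Ap P al 4 (of_real y) - Ap P al 3 (of_real y)))
        + (of_real (a y) * E' y) * ((1 - of_real y)^4 * poly (Q 3) (of_real y))
        + (of_real (b y) * E' y) * (\<i> * ((1 - of_real y)^4 * poly (Q 4) (of_real y)))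
        = (of_real (Re (w y)) * fRC P Q al 3 (of_real y) + of_real (Im (w y)) * fRC P Q al 4 (of_real y))
              / of_real (1 - y)) (at_left 1)"
      using kk evI
    proof eventually_elim
      case (elim y)
      have s: "1 - complex_of_real y \<noteq> 0" using elim by (simp add: complex_eq_iff)
      show ?case
        using alg_val[OF s elim(1), of "Ap P al 3 (of_real y)" "E' y" "poly (Q 3) (of_real y)" "Ap P al 4 (of_real y)" "poly (Q 4) (of_real y)"]
        by (simp add: fRC3_eq fRC4_eq Sp_def Tp_def a_def b_def E_def E'_def)
    qed
    show ?thesis using Lim_transform_eventually[OF lim eq] by simp
  qed
  show ?B
  proof -
    define X where "X y = \<i> * PhiP al (of_real y) * Ap P al 3 (of_real y) + (1 - of_real y)^2 * deriv (Sp P al 3) (of_real y)" for y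
    define Y1 where "Y1 y = \<i> * (\<i> * PhiP al (of_real y) * (Ap P al 4 (of_real y) - Ap P al 3 (of_real y))
        + (1 - of_real y)^2 * (deriv (Sp P al 4) (of_real y) - deriv (Sp P al 3) (of_real y)))" for y
    define Y2 where "Y2 y = - \<i> * PhiP al (of_real y) * ((1 - of_real y)^4 * poly (Q 3) (of_real y))
        + (1 - of_real y)^2 * deriv (Tp Q 3) (of_real y)" for y
    define Y3 where "Y3 y = \<i> * (- \<i> * PhiP al (of_real y) * ((1 - of_real y)^4 * poly (Q 4) (of_real y))
        + (1 - of_real y)^2 * deriv (Tp Q 4) (of_real y))" for y
    have "(X \<longlongrightarrow> X 1) (at_left 1)" unfolding X_def[abs_def]
      by (rule cont_tendsto_within') (intro continuous_intros cont_Ap cont_dSp cont_PhiP al)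
    hence lX: "(X \<longlongrightarrow> \<i> * (- 4 * of_real al)) (at_left 1)" by (simp add: X_def PhiP_def Ap_def)
    have "(Y1 \<longlongrightarrow> Y1 1) (at_left 1)" unfolding Y1_def[abs_def]
      by (rule cont_tendsto_within') (intro continuous_intros cont_Ap cont_dSp cont_PhiP al)
    hence lY1: "(Y1 \<longlongrightarrow> 0) (at_left 1)" by (simp add: Y1_def PhiP_def Ap_def)
    have "(Y2 \<longlongrightarrow> Y2 1) (at_left 1)" unfolding Y2_def[abs_def]
      by (rule cont_tendsto_within') (intro continuous_intros cont_dTp cont_PhiP al)
    hence lY2: "(Y2 \<longlongrightarrow> 0) (at_left 1)" by (simp add: Y2_def)
    have "(Y3 \<longlongrightarrow> Y3 1) (at_left 1)" unfolding Y3_def[abs_def]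
      by (rule cont_tendsto_within') (intro continuous_intros cont_dTp cont_PhiP al)
    hence lY3: "(Y3 \<longlongrightarrow> 0) (at_left 1)" by (simp add: Y3_def)
    have lim: "((\<lambda>y. k * X y + (of_real (b y) * E y) * Y1 y + (of_real (a y) * E' y) * Y2 y
        + (of_real (b y) * E' y) * Y3 y) \<longlongrightarrow> k * (\<i> * (- 4 * of_real al))) (at_left 1)"
      by (rule osc4[OF lX lY1 lY2 lY3 nrm])
    have eq: "eventually (\<lambda>y. k * X y + (of_real (b y) * E y) * Y1 y + (of_real (a y) * E' y) * Y2 y
        + (of_real (b y) * E' y) * Y3 y = of_real ((1 - y)^2) * (of_real (Re (w y)) * deriv (fRC P Q al 3) (of_real y)
              + of_real (Im (w y)) * deriv (fRC P Q al 4) (of_real y))) (at_left 1)"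
      using kk evI
    proof eventually_elim
      case (elim y)
      have z1: "of_real y \<noteq> (1::complex)" using elim by (simp add: complex_eq_iff)
      have rz: "Re (complex_of_real y) < 1" using elim by simp
      have Ph: "(1 - of_real y)^3 * phiD al (of_real y) = PhiP al (of_real y)" by (rule phiD_PhiP[OF z1 al])
      show ?case
        using alg_der[OF elim(1) Ph, of "Ap P al 3 (of_real y)" "deriv (Sp P al 3) (of_real y)" "E' y"
           "poly (Q 3) (of_real y)" "deriv (Tp Q 3) (of_real y)" "Ap P al 4 (of_real y)" "deriv (Sp P al 4) (of_real y)"
           "poly (Q 4) (of_real y)" "deriv (Tp Q 4) (of_real y)"]
        by (simp add: fRC3_deriv[OF rz al] fRC4_deriv[OF rz al] Sp_def Tp_def a_def b_def E_def E'_def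
             X_def Y1_def Y2_def Y3_def)
    qed
    show ?thesis using Lim_transform_eventually[OF lim eq] by (simp add: algebra_simps)
  qed
qed


lemma inv_factor:
  fixes A C P Q :: "real^'n^'n"
  assumes C: "C = P ** A ** Q" and dC: "det C \<noteq> 0"
  shows "matrix_inv A = Q ** matrix_inv C ** P"
proof -
  have "P ** (A ** Q ** matrix_inv C) = mat 1"
    using minv_works(1)[OF dC] unfolding C by (simp add: matrix_mul_assoc)
  hence "(A ** Q ** matrix_inv C) ** P = mat 1" using matrix_left_right_inverse by blast
  hence "A ** (Q ** matrix_inv C ** P) = mat 1" by (simp add: matrix_mul_assoc)
  thus ?thesis by (rule minv_unique)
qed

definition L0m :: "real \<Rightarrow> real^4^4" where
  "L0m al = (\<chi> i j. if i = 1 then (if j = 1 \<or> j = 4 then 1 else 0)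
                    else if i = 2 then (if j = 2 \<or> j = 3 then 1 else 0)
                    else if i = 3 then (if j = 3 then 4 * al else 0)
                    else (if j = 4 then - 4 * al else 0))"
definition L0i :: "real \<Rightarrow> real^4^4" where
  "L0i al = (\<chi> i j. if i = 1 then (if j = 1 then 1 else if j = 4 then 1 / (4 * al) else 0)
                    else if i = 2 then (if j = 2 then 1 else if j = 3 then - 1 / (4 * al) else 0)
                    else if i = 3 then (if j = 3 then 1 / (4 * al) else 0)
                    else (if j = 4 then - 1 / (4 * al) else 0))"

lemma L0_inv: "al \<noteq> 0 \<Longrightarrow> L0m al ** L0i al = mat 1"
proof -
  assume al: "al \<noteq> 0"
  have "(L0m al ** L0i al) $ i $ j = mat 1 $ i $ j" for i j
  proof -
    have "i = 1 \<or> i = 2 \<or> i = 3 \<or> i = 4" "j = 1 \<or> j = 2 \<or> j = 3 \<or> j = 4" by (rule exhaust_4)+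
    thus ?thesis using al by (elim disjE) (simp_all add: matmul_entry L0m_def L0i_def mat_def)
  qed
  thus ?thesis by (simp add: vec_eq_iff)
qed


definition wv :: "real \<Rightarrow> 4 \<Rightarrow> real \<Rightarrow> complex" where
  "wv al j y = (if j = 3 then \<i> * cnj (EC al (of_real y)) else cnj (EC al (of_real y)))"
definition hW :: "(4 \<Rightarrow> complex poly) \<Rightarrow> (4 \<Rightarrow> complex poly) \<Rightarrow> real \<Rightarrow> complex \<Rightarrow> real \<Rightarrow> complex" where
  "hW P Q al w y = of_real (Re w) * fRC P Q al 3 (of_real y) + of_real (Im w) * fRC P Q al 4 (of_real y)"
definition hdW :: "(4 \<Rightarrow> complex poly) \<Rightarrow> (4 \<Rightarrow> complex poly) \<Rightarrow> real \<Rightarrow> complex \<Rightarrow> real \<Rightarrow> complex" where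
  "hdW P Q al w y = of_real (Re w) * deriv (fRC P Q al 3) (of_real y) + of_real (Im w) * deriv (fRC P Q al 4) (of_real y)"
definition ccol :: "(4 \<Rightarrow> complex poly) \<Rightarrow> (4 \<Rightarrow> complex poly) \<Rightarrow> real \<Rightarrow> 4 \<Rightarrow> real \<Rightarrow> complex" where
  "ccol P Q al j y = (if j = 1 \<or> j = 2 then fRC P Q al j (of_real y) else hW P Q al (wv al j y) y / of_real (1 - y))"
definition dcol :: "(4 \<Rightarrow> complex poly) \<Rightarrow> (4 \<Rightarrow> complex poly) \<Rightarrow> real \<Rightarrow> 4 \<Rightarrow> real \<Rightarrow> complex" where
  "dcol P Q al j y = (if j = 1 \<or> j = 2 then of_real ((1 - y)^3) * deriv (fRC P Q al j) (of_real y)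
                      else of_real ((1 - y)^2) * hdW P Q al (wv al j y) y)"
definition Cc :: "(4 \<Rightarrow> complex poly) \<Rightarrow> (4 \<Rightarrow> complex poly) \<Rightarrow> real \<Rightarrow> real \<Rightarrow> real^4^4" where
  "Cc P Q al y = (\<chi> i j. if i = 1 then Re (ccol P Q al j y) else if i = 2 then Im (ccol P Q al j y)
                          else if i = 3 then Re (dcol P Q al j y) else Im (dcol P Q al j y))"

lemma wv_prop: "y < 1 \<Longrightarrow> wv al j y * EC al (of_real y) = (if j = 3 then \<i> else 1) \<and> norm (wv al j y) \<le> 1"
proof -
  assume y: "y < 1"
  have n: "norm (EC al (of_real y)) = 1" by (rule norm_EC[OF y])
  have "cnj (EC al (of_real y)) * EC al (of_real y) = of_real ((norm (EC al (of_real y)))^2)"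
    using complex_norm_square[of "EC al (of_real y)"] by (simp add: mult.commute)
  hence "cnj (EC al (of_real y)) * EC al (of_real y) = 1" using n by simp
  thus ?thesis using n by (auto simp: wv_def norm_mult)
qed

lemma ev_wv: "eventually (\<lambda>y. wv al j y * EC al (of_real y) = (if j = 3 then \<i> else 1) \<and> norm (wv al j y) \<le> 1) (at_left 1)"
proof -
  have "eventually (\<lambda>y. y \<in> {0<..<1}) (at_left (1::real))" by (rule eventually_at_left_real) simp
  thus ?thesis by eventually_elim (simp add: wv_prop)
qed

lemma fRC12_eq: "fRC P Q al 1 = Rp P al 1" "fRC P Q al 2 = Rp P al 2"
  by (simp_all add: fRC_def fun_eq_iff)

lemma ccol_lim:
  assumes al: "al \<noteq> 0"
  shows "(ccol P Q al j \<longlongrightarrow> (if j = 1 \<or> j = 4 then 1 else \<i>)) (at_left 1)"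
proof -
  have "j = 1 \<or> j = 2 \<or> j = 3 \<or> j = 4" by (rule exhaust_4)
  thus ?thesis
  proof (elim disjE)
    assume j: "j = 1"
    have "((\<lambda>y. Rp P al 1 (of_real y)) \<longlongrightarrow> Rp P al 1 (of_real 1)) (at_left 1)"
      by (rule cont_tendsto_within', rule cont_comp_of_real[OF holomorphic_on_imp_continuous_on[OF Rp_holo]]) auto
    thus ?thesis using j by (simp add: ccol_def[abs_def] fRC12_eq Rp_def)
  next
    assume j: "j = 2"
    have "((\<lambda>y. Rp P al 2 (of_real y)) \<longlongrightarrow> Rp P al 2 (of_real 1)) (at_left 1)"
      by (rule cont_tendsto_within', rule cont_comp_of_real[OF holomorphic_on_imp_continuous_on[OF Rp_holo]]) auto
    thus ?thesis using j by (simp add: ccol_def[abs_def] fRC12_eq Rp_def)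
  next
    assume j: "j = 3"
    have "((\<lambda>y. (of_real (Re (wv al 3 y)) * fRC P Q al 3 (of_real y) + of_real (Im (wv al 3 y)) * fRC P Q al 4 (of_real y))
              / of_real (1 - y)) \<longlongrightarrow> \<i>) (at_left 1)"
      by (rule right_lim(1)[OF al]) (use ev_wv[of al 3] in simp)
    thus ?thesis using j by (simp add: ccol_def[abs_def] hW_def)
  next
    assume j: "j = 4"
    have "((\<lambda>y. (of_real (Re (wv al 4 y)) * fRC P Q al 3 (of_real y) + of_real (Im (wv al 4 y)) * fRC P Q al 4 (of_real y))
              / of_real (1 - y)) \<longlongrightarrow> 1) (at_left 1)"
      by (rule right_lim(1)[OF al]) (use ev_wv[of al 4] in simp)
    thus ?thesis using j by (simp add: ccol_def[abs_def] hW_def)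
  qed
qed

lemma dcol_lim:
  assumes al: "al \<noteq> 0"
  shows "(dcol P Q al j \<longlongrightarrow> (if j = 1 \<or> j = 2 then 0 else if j = 3 then 4 * of_real al else - 4 * \<i> * of_real al)) (at_left 1)"
proof -
  have "j = 1 \<or> j = 2 \<or> j = 3 \<or> j = 4" by (rule exhaust_4)
  thus ?thesis
  proof (elim disjE)
    assume j: "j = 1"
    have "((\<lambda>y. of_real ((1 - y)^3) * deriv (Rp P al 1) (of_real y)) \<longlongrightarrow> of_real ((1 - 1)^3) * deriv (Rp P al 1) (of_real 1)) (at_left 1)"
      by (rule cont_tendsto_within', intro continuous_intros,
          rule cont_comp_of_real[OF holomorphic_on_imp_continuous_on[OF holomorphic_deriv[OF Rp_holo open_UNIV]]]) auto
    thus ?thesis using j by (simp add: dcol_def[abs_def] fRC12_eq)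
  next
    assume j: "j = 2"
    have "((\<lambda>y. of_real ((1 - y)^3) * deriv (Rp P al 2) (of_real y)) \<longlongrightarrow> of_real ((1 - 1)^3) * deriv (Rp P al 2) (of_real 1)) (at_left 1)"
      by (rule cont_tendsto_within', intro continuous_intros,
          rule cont_comp_of_real[OF holomorphic_on_imp_continuous_on[OF holomorphic_deriv[OF Rp_holo open_UNIV]]]) auto
    thus ?thesis using j by (simp add: dcol_def[abs_def] fRC12_eq)
  next
    assume j: "j = 3"
    have "((\<lambda>y. of_real ((1 - y)^2) * (of_real (Re (wv al 3 y)) * deriv (fRC P Q al 3) (of_real y)
              + of_real (Im (wv al 3 y)) * deriv (fRC P Q al 4) (of_real y))) \<longlongrightarrow> \<i> * (- 4 * \<i> * of_real al)) (at_left 1)"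
      by (rule right_lim(2)[OF al]) (use ev_wv[of al 3] in simp)
    moreover have e: "\<i> * (- 4 * \<i> * complex_of_real al) = 4 * of_real al" by (simp add: complex_eq_iff)
    ultimately have "((\<lambda>y. of_real ((1 - y)^2) * (of_real (Re (wv al 3 y)) * deriv (fRC P Q al 3) (of_real y)
              + of_real (Im (wv al 3 y)) * deriv (fRC P Q al 4) (of_real y))) \<longlongrightarrow> 4 * of_real al) (at_left 1)"
      by (simp only: e)
    thus ?thesis using j by (simp add: dcol_def[abs_def] hdW_def)
  next
    assume j: "j = 4"
    have "((\<lambda>y. of_real ((1 - y)^2) * (of_real (Re (wv al 4 y)) * deriv (fRC P Q al 3) (of_real y)
              + of_real (Im (wv al 4 y)) * deriv (fRC P Q al 4) (of_real y))) \<longlongrightarrow> 1 * (- 4 * \<i> * of_real al)) (at_left 1)"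
      by (rule right_lim(2)[OF al]) (use ev_wv[of al 4] in simp)
    thus ?thesis using j by (simp add: dcol_def[abs_def] hdW_def)
  qed
qed

lemma Cc_lim:
  assumes al: "al \<noteq> 0"
  shows "((\<lambda>y. Cc P Q al y $ i $ j) \<longlongrightarrow> L0m al $ i $ j) (at_left 1)"
proof -
  have c: "((\<lambda>y. Re (ccol P Q al j y)) \<longlongrightarrow> Re (if j = 1 \<or> j = 4 then 1 else \<i>)) (at_left 1)"
          "((\<lambda>y. Im (ccol P Q al j y)) \<longlongrightarrow> Im (if j = 1 \<or> j = 4 then 1 else \<i>)) (at_left 1)"
    using tendsto_Re[OF ccol_lim[OF al]] tendsto_Im[OF ccol_lim[OF al]] by auto
  have d: "((\<lambda>y. Re (dcol P Q al j y)) \<longlongrightarrow> Re (if j = 1 \<or> j = 2 then 0 else if j = 3 then 4 * of_real al else - 4 * \<i> * of_real al)) (at_left 1)"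
          "((\<lambda>y. Im (dcol P Q al j y)) \<longlongrightarrow> Im (if j = 1 \<or> j = 2 then 0 else if j = 3 then 4 * of_real al else - 4 * \<i> * of_real al)) (at_left 1)"
    using tendsto_Re[OF dcol_lim[OF al]] tendsto_Im[OF dcol_lim[OF al]] by auto
  have "i = 1 \<or> i = 2 \<or> i = 3 \<or> i = 4" "j = 1 \<or> j = 2 \<or> j = 3 \<or> j = 4" by (rule exhaust_4)+
  thus ?thesis using c d by (elim disjE) (simp_all add: Cc_def L0m_def)
qed


definition Pm :: "real \<Rightarrow> real^4^4" where
  "Pm y = (\<chi> i j. if i = j then (if i = 1 \<or> i = 2 then 1 else (1 - y)^3) else 0)"
definition Qm :: "real \<Rightarrow> real \<Rightarrow> real^4^4" where
  "Qm al y = (\<chi> i j. if i = 1 \<and> j = 1 then 1 else if i = 2 \<and> j = 2 then 1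
      else if (i = 3 \<or> i = 4) \<and> (j = 3 \<or> j = 4) then (if i = 3 then Re (wv al j y) else Im (wv al j y)) / (1 - y)
      else 0)"

lemma Cc_eq:
  assumes y: "y < 1" and al: "astar + a \<noteq> 0"
  shows "Cc P Q (astar + a) y = Pm y ** FR P Q astar y a ** Qm (astar + a) y"
proof -
  have s: "1 - y \<noteq> 0" using y by simp
  have "Cc P Q (astar + a) y $ i $ j = (Pm y ** FR P Q astar y a ** Qm (astar + a) y) $ i $ j" for i j
  proof -
    have "i = 1 \<or> i = 2 \<or> i = 3 \<or> i = 4" "j = 1 \<or> j = 2 \<or> j = 3 \<or> j = 4" by (rule exhaust_4)+
    moreover have h1: "(1 - y)^3 * X / (1 - y) = (1 - y)^2 * X" for X
      using s by (simp add: power3_eq_cube power2_eq_square)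
    ultimately show ?thesis using s
      apply (elim disjE)
      apply (simp_all add: matmul_entry Cc_def Pm_def Qm_def FR_entries[OF y al] ccol_def dcol_def hW_def hdW_def)
      apply (simp_all add: add_divide_distrib h1 distrib_left mult.commute mult.left_commute)
      done
  qed
  thus ?thesis by (simp add: vec_eq_iff)
qed


lemma right_bound:
  assumes al: "astar + a \<noteq> 0"
  shows "\<exists>C. eventually (\<lambda>x. \<forall>k j. (k = 3 \<or> k = 4) \<and> (j = 3 \<or> j = 4) \<longrightarrow>
            \<bar>matrix_inv (FR P Q astar x a) $ k $ j\<bar> \<le> C * (1 - x)^2) (at_left 1)"
proof -
  define al' where "al' = astar + a"
  have al': "al' \<noteq> 0" using al by (simp add: al'_def)
  have d0: "det (L0m al') \<noteq> 0" using minv_unique(2)[OF L0_inv[OF al']] .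
  obtain B where evB: "eventually (\<lambda>x. det (Cc P Q al' x) \<noteq> 0 \<and> (\<forall>k j. \<bar>matrix_inv (Cc P Q al' x) $ k $ j\<bar> \<le> B)) (at_left 1)"
    using ev_bounded_inv[OF Cc_lim[OF al'] d0] by (rule exE)
  have evI: "eventually (\<lambda>x. x \<in> {0<..<1}) (at_left (1::real))" by (rule eventually_at_left_real) simp
  have "eventually (\<lambda>x. \<forall>k j. (k = 3 \<or> k = 4) \<and> (j = 3 \<or> j = 4) \<longrightarrow>
            \<bar>matrix_inv (FR P Q astar x a) $ k $ j\<bar> \<le> (2 * B) * (1 - x)^2) (at_left 1)"
    using evB evI
  proof eventually_elim
    case (elim x)
    have x: "0 < x" "x < 1" using elim by auto
    define Ci where "Ci = matrix_inv (Cc P Q al' x)"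
    have inv: "matrix_inv (FR P Q astar x a) = Qm al' x ** Ci ** Pm x"
      unfolding Ci_def by (rule inv_factor[OF Cc_eq[OF x(2) al, folded al'_def]]) (use elim in simp)
    have Qb: "\<bar>Qm al' x $ k $ m\<bar> \<le> 1 / (1 - x)" if "k = 3 \<or> k = 4" "m = 3 \<or> m = 4" for k m
    proof -
      have n: "norm (wv al' m x) \<le> 1" using wv_prop[OF x(2)] by blast
      have "\<bar>Re (wv al' m x)\<bar> \<le> 1" "\<bar>Im (wv al' m x)\<bar> \<le> 1"
        using n abs_Re_le_cmod[of "wv al' m x"] abs_Im_le_cmod[of "wv al' m x"] by linarith+
      thus ?thesis using that x by (auto simp: Qm_def divide_right_mono)
    qed
    have B0: "0 \<le> B" using elim by (meson abs_ge_zero order_trans)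
    show ?case
    proof (intro allI impI)
      fix k j :: 4 assume kj: "(k = 3 \<or> k = 4) \<and> (j = 3 \<or> j = 4)"
      have e: "(Qm al' x ** Ci ** Pm x) $ k $ j = (1 - x)^3 * (Qm al' x $ k $ 3 * Ci $ 3 $ j + Qm al' x $ k $ 4 * Ci $ 4 $ j)"
        using kj by (elim conjE disjE) (simp_all add: matmul_entry Pm_def Qm_def)
      have H: "\<bar>Qm al' x $ k $ 3 * Ci $ 3 $ j + Qm al' x $ k $ 4 * Ci $ 4 $ j\<bar>
            \<le> 1 / (1 - x) * B + 1 / (1 - x) * B"
      proof -
        have "\<bar>Qm al' x $ k $ 3 * Ci $ 3 $ j\<bar> \<le> 1 / (1 - x) * B"
          unfolding abs_mult by (rule mult_mono) (use Qb kj elim x in \<open>auto simp: Ci_def\<close>)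
        moreover have "\<bar>Qm al' x $ k $ 4 * Ci $ 4 $ j\<bar> \<le> 1 / (1 - x) * B"
          unfolding abs_mult by (rule mult_mono) (use Qb kj elim x in \<open>auto simp: Ci_def\<close>)
        ultimately show ?thesis by linarith
      qed
      have "\<bar>(Qm al' x ** Ci ** Pm x) $ k $ j\<bar> \<le> (1 - x)^3 * (1 / (1 - x) * B + 1 / (1 - x) * B)"
      proof -
        have p: "\<bar>(1 - x)^3\<bar> = (1 - x)^3" using x by simp
        show ?thesis unfolding e abs_mult p by (rule mult_left_mono[OF H]) (use x in simp)
      qed
      also have "\<dots> = (2 * B) * (1 - x)^2"
      proof -
        have g: "\<And>s::real. s \<noteq> 0 \<Longrightarrow> s^3 * (1 / s * B + 1 / s * B) = (2 * B) * s^2"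
          by (simp add: field_simps power3_eq_cube power2_eq_square)
        show ?thesis by (rule g) (use x in simp)
      qed
      finally show "\<bar>matrix_inv (FR P Q astar x a) $ k $ j\<bar> \<le> (2 * B) * (1 - x)^2" unfolding inv .
    qed
  qed
  thus ?thesis by (rule exI)
qed


lemma adm_facts:
  assumes "admissible_F astar J PL P Q" "a \<in> J"
  shows "astar + a \<noteq> 0" "\<And>y. y \<in> {0..<1} \<Longrightarrow> det (FR P Q astar y a) \<noteq> 0"
        "\<And>y. y \<in> {-1<..0} \<Longrightarrow> det (FL PL y) \<noteq> 0"
        "FL PL 0 ** MF PL P Q astar a = FR P Q astar 0 a"
        "det (MF PL P Q astar a) \<noteq> 0"
proof -
  show "astar + a \<noteq> 0" using assms unfolding admissible_F_def
    by (metis add.commute add_eq_0_iff2)  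
  show "\<And>y. y \<in> {0..<1} \<Longrightarrow> det (FR P Q astar y a) \<noteq> 0" using assms unfolding admissible_F_def by blast
  show FL: "\<And>y. y \<in> {-1<..0} \<Longrightarrow> det (FL PL y) \<noteq> 0" using assms unfolding admissible_F_def by blast
  have d0: "det (FL PL 0) \<noteq> 0" using FL by auto
  show "FL PL 0 ** MF PL P Q astar a = FR P Q astar 0 a"
    unfolding MF_def by (simp add: matrix_mul_assoc minv_works[OF d0])
  have dR: "det (FR P Q astar 0 a) \<noteq> 0" using assms unfolding admissible_F_def by auto
  have "det (FL PL 0) * det (MF PL P Q astar a) = det (FR P Q astar 0 a)"
    unfolding MF_def by (simp add: det_mul[symmetric] matrix_mul_assoc minv_works[OF d0])
  thus "det (MF PL P Q astar a) \<noteq> 0" using dR by auto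
qed


lemma alpha_cont:
  fixes F :: "real \<Rightarrow> real^4^4" and u v :: "4 \<Rightarrow> real \<Rightarrow> complex" and g :: "real \<Rightarrow> complex"
  assumes inv: "\<And>y. y \<in> {-1<..<1} \<Longrightarrow> det (F y) \<noteq> 0"
  and Fu: "\<And>y k. y \<in> {-1<..<1} \<Longrightarrow> F y $1$k = Re (u k y) \<and> F y $2$k = Im (u k y) \<and>
                                      F y $3$k = Re (v k y) \<and> F y $4$k = Im (v k y)"
  and du: "\<And>y k. y \<in> {-1<..<1} \<Longrightarrow> (u k has_vector_derivative v k y) (at y)"
  and cv: "\<And>k. continuous_on {-1<..<1} (v k)"
  and cg: "continuous_on {-1<..<1} g"
  shows "continuous_on {-1<..<1} (alphaF F g k)"
proof -
  define I where "I = {-1<..<1::real}"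
  have cu: "continuous_on I (u k)" for k
  proof (intro continuous_at_imp_continuous_on ballI)
    fix y assume "y \<in> I"
    hence "(u k has_vector_derivative v k y) (at y)" using du by (simp add: I_def)
    thus "isCont (u k) y" by (rule has_vector_derivative_continuous)
  qed
  have Fu': "F y $1$k = Re (u k y)" "F y $2$k = Im (u k y)" "F y $3$k = Re (v k y)" "F y $4$k = Im (v k y)"
    if "y \<in> I" for y k using Fu[of y k] that by (auto simp: I_def)
  have cF: "continuous_on I (\<lambda>y. F y $ i $ j)" for i j
  proof -
    have "i = 1 \<or> i = 2 \<or> i = 3 \<or> i = 4" by (rule exhaust_4)
    thus ?thesis
    proof (elim disjE)
      assume "i = 1" thus ?thesis
        using continuous_on_cong[of I I "\<lambda>y. F y $ 1 $ j" "\<lambda>y. Re (u j y)"] Fu' cu[of j]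
        by (auto intro: continuous_intros)
    next
      assume "i = 2" thus ?thesis
        using continuous_on_cong[of I I "\<lambda>y. F y $ 2 $ j" "\<lambda>y. Im (u j y)"] Fu' cu[of j]
        by (auto intro: continuous_intros)
    next
      assume "i = 3" thus ?thesis
        using continuous_on_cong[of I I "\<lambda>y. F y $ 3 $ j" "\<lambda>y. Re (v j y)"] Fu' cv[of j]
        by (auto intro: continuous_intros simp: I_def)
    next
      assume "i = 4" thus ?thesis
        using continuous_on_cong[of I I "\<lambda>y. F y $ 4 $ j" "\<lambda>y. Im (v j y)"] Fu' cv[of j]
        by (auto intro: continuous_intros simp: I_def)
    qed
  qed
  have cinv: "continuous_on I (\<lambda>y. matrix_inv (F y) $ k $ j)" for k j
    by (rule minv_cont[OF cF]) (use inv in \<open>auto simp: I_def\<close>)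
  have cgI: "continuous_on I g" using cg by (simp add: I_def)
  show ?thesis
    unfolding alphaF_def I_def[symmetric] by (intro continuous_intros cinv cgI)
qed

lemma alpha_abs: "\<bar>alphaF F g k x\<bar> \<le> (\<bar>matrix_inv (F x) $ k $ 3\<bar> + \<bar>matrix_inv (F x) $ k $ 4\<bar>) * norm (g x)"
proof -
  have "\<bar>alphaF F g k x\<bar> \<le> \<bar>matrix_inv (F x) $ k $ 3\<bar> * \<bar>Re (g x)\<bar> + \<bar>matrix_inv (F x) $ k $ 4\<bar> * \<bar>Im (g x)\<bar>"
    unfolding alphaF_def by (rule order_trans[OF abs_triangle_ineq]) (simp add: abs_mult)
  also have "\<dots> \<le> \<bar>matrix_inv (F x) $ k $ 3\<bar> * norm (g x) + \<bar>matrix_inv (F x) $ k $ 4\<bar> * norm (g x)"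
    by (intro add_mono mult_left_mono abs_Re_le_cmod abs_Im_le_cmod) auto
  finally show ?thesis by (simp add: algebra_simps)
qed

lemma g_bound:
  assumes "g \<in> Yspace"
  shows "\<exists>Bh. Bh \<ge> 0 \<and> (\<forall>y\<in>{-1<..<1}. norm (g y) * ((1 + y) * (1 - y)^2) \<le> Bh)"
proof -
  obtain h where h: "continuous_on {-1..1} h" "\<And>y. y \<in> {-1<..<1} \<Longrightarrow> h y = complex_of_real ((1 + y) * (1 - y)^2) * g y"
    using assms unfolding Yspace_def by blast
  have "bounded (h ` {-1..1})" by (rule compact_imp_bounded[OF compact_continuous_image[OF h(1) compact_Icc]])
  then obtain B where B: "B > 0" "\<And>x. x \<in> h ` {-1..1} \<Longrightarrow> norm x \<le> B" by (auto simp: bounded_pos)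
  have "norm (g y) * ((1 + y) * (1 - y)^2) \<le> B" if y: "y \<in> {-1<..<1}" for y
  proof -
    have r: "(1 + y) * (1 - y)^2 \<ge> 0" using y by simp
    have "norm (h y) = norm (complex_of_real ((1 + y) * (1 - y)^2)) * norm (g y)"
      using h(2)[OF y] by (simp only: norm_mult)
    also have "\<dots> = norm (g y) * ((1 + y) * (1 - y)^2)"
      using r by (simp only: norm_of_real abs_of_nonneg mult.commute)
    finally have "norm (h y) = norm (g y) * ((1 + y) * (1 - y)^2)" .
    moreover have "norm (h y) \<le> B" using B(2)[of "h y"] y by auto
    ultimately show ?thesis by simp
  qed
  thus ?thesis using B(1) by (intro exI[of _ B]) auto
qed

theorem lemma3p27:
  fixes astar :: real and J :: "real set" and PL P Q :: "4 \<Rightarrow> complex poly"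
    and g :: "real \<Rightarrow> complex" and a :: real
  assumes "admissible_F astar J PL P Q"
    and "g \<in> Yspace"
    and "a \<in> J"
  shows "C2_on (LFinv (\<lambda>y. Ffund PL P Q astar y a) (MF PL P Q astar a) g) ({-1<..<1} - {0})
       \<and> LFinv (\<lambda>y. Ffund PL P Q astar y a) (MF PL P Q astar a) g C1_differentiable_on {-1<..<1}
       \<and> (\<forall>y\<in>{-1<..<1} - {0}.
            LF (\<lambda>t. Ffund PL P Q astar t a)
               (LFinv (\<lambda>t. Ffund PL P Q astar t a) (MF PL P Q astar a) g) y = g y)"
proof -
  note adm = adm_facts[OF assms(1,3)]
  define al where "al = astar + a"
  have al: "al \<noteq> 0" using adm(1) by (simp add: al_def)
  define M where "M = MF PL P Q astar a"
  define F where "F = (\<lambda>y. Ffund PL P Q astar y a)"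
  define u where "u k y = (if y \<le> 0 then GLf PL M k (of_real y) else fRC P Q al k (of_real y))" for k y
  define v where "v k y = (if y \<le> 0 then deriv (GLf PL M k) (of_real y) else deriv (fRC P Q al k) (of_real y))" for k y
  define w where "w k y = (if y \<le> 0 then deriv (deriv (GLf PL M k)) (of_real y)
                           else deriv (deriv (fRC P Q al k)) (of_real y))" for k y
  have FLM: "(FL PL 0 ** M) = FR P Q astar 0 a" using adm(4) by (simp add: M_def)
  have at0: "GLf PL M k 0 = fRC P Q al k 0 \<and> deriv (GLf PL M k) 0 = deriv (fRC P Q al k) 0" for k
    using arg_cong[OF FLM, of "\<lambda>X. X$1$k"] arg_cong[OF FLM, of "\<lambda>X. X$2$k"]
          arg_cong[OF FLM, of "\<lambda>X. X$3$k"] arg_cong[OF FLM, of "\<lambda>X. X$4$k"]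
    by (simp add: FLM_entries[of 0] FR_entries[of 0, OF _ adm(1)] al_def complex_eq_iff)
  have inv: "det (F y) \<noteq> 0" if "y \<in> {-1<..<1}" for y
  proof (cases "y \<le> 0")
    case True
    thus ?thesis using that adm(3)[of y] adm(5) by (simp add: F_def Ffund_def det_mul)
  next
    case False
    thus ?thesis using that adm(2)[of y] by (simp add: F_def Ffund_def)
  qed
  have Fu: "F y $1$k = Re (u k y) \<and> F y $2$k = Im (u k y) \<and> F y$3$k = Re (v k y) \<and> F y$4$k = Im (v k y)"
    if "y \<in> {-1<..<1}" for y k
  proof (cases "y \<le> 0")
    case True
    thus ?thesis using that by (simp add: F_def Ffund_def u_def v_def FLM_entries M_def)
  next
    case False
    thus ?thesis using that adm(1) by (simp add: F_def Ffund_def u_def v_def FR_entries al_def)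
  qed
  have GLh: "GLf PL M k holomorphic_on {z. Re z > -1}" for k by (rule GLf_holo)
  have GLh': "deriv (GLf PL M k) holomorphic_on {z. Re z > -1}" for k by (intro holomorphic_deriv GLh openS2)
  have GLh'': "deriv (deriv (GLf PL M k)) holomorphic_on {z. Re z > -1}" for k by (intro holomorphic_deriv GLh' openS2)
  have fRh: "fRC P Q al k holomorphic_on {z. Re z < 1}" for k by (rule fRC_holo[OF al])
  have fRh': "deriv (fRC P Q al k) holomorphic_on {z. Re z < 1}" for k by (intro holomorphic_deriv fRh openS1)
  have fRh'': "deriv (deriv (fRC P Q al k)) holomorphic_on {z. Re z < 1}" for k by (intro holomorphic_deriv fRh' openS1)
  have du: "(u k has_vector_derivative v k y) (at y)" if y: "y \<in> {-1<..<1}" for y k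
  proof -
    consider "y < 0" | "y = 0" | "y > 0" by linarith
    thus ?thesis
    proof cases
      case 1
      thus ?thesis using y unfolding v_def
        by (simp, intro hvd_of_real[OF GLh openS2, where T = "{-1<..<0}"]) (auto simp: u_def)
    next
      case 3
      thus ?thesis using y unfolding v_def
        by (simp, intro hvd_of_real[OF fRh openS1, where T = "{0<..<1}"]) (auto simp: u_def)
    next
      case 2
      have d1: "((\<lambda>t. GLf PL M k (of_real t)) has_vector_derivative deriv (GLf PL M k) 0) (at 0)"
        using hvd_of_real[OF GLh openS2, of 0 UNIV] by simp
      have d2: "((\<lambda>t. fRC P Q al k (of_real t)) has_vector_derivative deriv (GLf PL M k) 0) (at 0)"
        using hvd_of_real[OF fRh openS1, of 0 UNIV] at0[of k] by simp
      have "u k = (\<lambda>t. if t \<le> 0 then GLf PL M k (of_real t) else fRC P Q al k (of_real t))"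
        by (simp add: u_def fun_eq_iff)
      thus ?thesis using glue_deriv[OF d1 d2] at0[of k] 2 by (simp add: v_def)
    qed
  qed
  have dv: "(v k has_vector_derivative w k y) (at y)" if y: "y \<in> {-1<..<1} - {0}" for y k
  proof -
    consider "y < 0" | "y > 0" using y by force
    thus ?thesis
    proof cases
      case 1
      thus ?thesis using y unfolding w_def
        by (simp, intro hvd_of_real[OF GLh' openS2, where T = "{-1<..<0}"]) (auto simp: v_def)
    next
      case 2
      thus ?thesis using y unfolding w_def
        by (simp, intro hvd_of_real[OF fRh' openS1, where T = "{0<..<1}"]) (auto simp: v_def)
    qed
  qed
  have cv: "continuous_on {-1<..<1} (v k)" for k
  proof -
    have "continuous_on {-1<..<1} (\<lambda>y. if y \<le> 0 then deriv (GLf PL M k) (of_real y) else deriv (fRC P Q al k) (of_real y))"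
      by (rule continuous_on_cases_le[where h = "\<lambda>y. y"])
         (auto intro!: cont_comp_of_real[OF holomorphic_on_imp_continuous_on[OF GLh']]
                       cont_comp_of_real[OF holomorphic_on_imp_continuous_on[OF fRh']] simp: at0)
    thus ?thesis by (simp add: v_def[abs_def])
  qed
  have cw: "continuous_on ({-1<..<1} - {0}) (w k)" for k
  proof -
    have "continuous_on ({-1<..<1} - {0}) (\<lambda>y. if y \<le> 0 then deriv (deriv (GLf PL M k)) (of_real y) else deriv (deriv (fRC P Q al k)) (of_real y))"
      by (rule continuous_on_cases_le[where h = "\<lambda>y. y"])
         (auto intro!: cont_comp_of_real[OF holomorphic_on_imp_continuous_on[OF GLh'']]
                       cont_comp_of_real[OF holomorphic_on_imp_continuous_on[OF fRh'']])
    thus ?thesis by (simp add: w_def[abs_def])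
  qed
  have cg: "continuous_on {-1<..<1} g" using assms(2) by (simp add: Yspace_def)
  have calpha: "continuous_on {-1<..<1} (alphaF F g k)" for k
    by (rule alpha_cont[OF inv Fu du cv cg])
  obtain Bh where Bh: "Bh \<ge> 0" "\<And>y. y \<in> {-1<..<1} \<Longrightarrow> norm (g y) * ((1 + y) * (1 - y)^2) \<le> Bh"
    using g_bound[OF assms(2)] by (rule exE) blast
  have int1: "alphaF F g k integrable_on {-1..y}" if y: "y \<in> {-1<..<1}" for y k
  proof -
    obtain C where C: "eventually (\<lambda>x. \<forall>k. \<bar>matrix_inv (FL PL x ** M) $ k $ 3\<bar> \<le> C * (1 + x) \<and>
                                \<bar>matrix_inv (FL PL x ** M) $ k $ 4\<bar> \<le> C * (1 + x)) (at_right (-1))"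
      using left_bound[OF adm(5)[folded M_def]] by (rule exE)
    have evI: "eventually (\<lambda>x. x \<in> {-1<..<0}) (at_right (-1::real))" by (rule eventually_at_right_real) simp
    have "eventually (\<lambda>x. \<bar>alphaF F g k x\<bar> \<le> 2 * C * Bh) (at_right (-1))"
      using C evI
    proof eventually_elim
      case (elim x)
      have x: "-1 < x" "x < 0" using elim by auto
      have Fx: "F x = FL PL x ** M" using x by (simp add: F_def Ffund_def M_def)
      have c1: "\<bar>matrix_inv (F x) $ k $ 3\<bar> \<le> C * (1 + x)" "\<bar>matrix_inv (F x) $ k $ 4\<bar> \<le> C * (1 + x)"
        using elim Fx by auto
      have C0: "0 \<le> C"
      proof (rule ccontr)
        assume "\<not> 0 \<le> C"
        moreover have "0 < 1 + x" using x by simp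
        ultimately have "C * (1 + x) < 0" by (simp add: mult_neg_pos)
        thus False using c1(1) by linarith
      qed
      have gb: "(1 + x) * norm (g x) \<le> Bh"
      proof -
        have "(1 + x) * norm (g x) \<le> norm (g x) * ((1 + x) * (1 - x)^2)"
        proof -
          have "1 \<le> (1 - x)^2" using x by (intro one_le_power) simp
          hence "(1 + x) * norm (g x) * 1 \<le> (1 + x) * norm (g x) * (1 - x)^2"
            using x by (intro mult_left_mono) auto
          thus ?thesis by (simp add: algebra_simps)
        qed
        also have "\<dots> \<le> Bh" using Bh(2)[of x] x by simp
        finally show ?thesis .
      qed
      have "\<bar>alphaF F g k x\<bar> \<le> (\<bar>matrix_inv (F x) $ k $ 3\<bar> + \<bar>matrix_inv (F x) $ k $ 4\<bar>) * norm (g x)"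
        by (rule alpha_abs)
      also have "\<dots> \<le> (C * (1 + x) + C * (1 + x)) * norm (g x)"
        using c1 by (intro mult_right_mono) auto
      also have "\<dots> = 2 * C * ((1 + x) * norm (g x))" by (simp add: algebra_simps)
      also have "\<dots> \<le> 2 * C * Bh" using gb C0 by (intro mult_left_mono) auto
      finally show ?case .
    qed
    thus ?thesis by (rule int_from_left[OF calpha _ y])
  qed
  have int2: "alphaF F g k integrable_on {y..1}" if y: "y \<in> {-1<..<1}" and k: "k = 3 \<or> k = 4" for y k
  proof -
    obtain C where C: "eventually (\<lambda>x. \<forall>k j. (k = 3 \<or> k = 4) \<and> (j = 3 \<or> j = 4) \<longrightarrow>
            \<bar>matrix_inv (FR P Q astar x a) $ k $ j\<bar> \<le> C * (1 - x)^2) (at_left 1)"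
      using right_bound[OF adm(1)] by (rule exE)
    have evI: "eventually (\<lambda>x. x \<in> {0<..<1}) (at_left (1::real))" by (rule eventually_at_left_real) simp
    have "eventually (\<lambda>x. \<bar>alphaF F g k x\<bar> \<le> 2 * C * Bh) (at_left 1)"
      using C evI
    proof eventually_elim
      case (elim x)
      have x: "0 < x" "x < 1" using elim by auto
      have Fx: "F x = FR P Q astar x a" using x by (simp add: F_def Ffund_def)
      have c1: "\<bar>matrix_inv (F x) $ k $ 3\<bar> \<le> C * (1 - x)^2" "\<bar>matrix_inv (F x) $ k $ 4\<bar> \<le> C * (1 - x)^2"
        using elim Fx k by auto
      have C0: "0 \<le> C"
      proof (rule ccontr)
        assume "\<not> 0 \<le> C"
        moreover have "0 < (1 - x)^2" using x by simp
        ultimately have "C * (1 - x)^2 < 0" by (simp add: mult_neg_pos)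
        thus False using c1(1) by linarith
      qed
      have gb: "(1 - x)^2 * norm (g x) \<le> Bh"
      proof -
        have "(1 - x)^2 * norm (g x) * 1 \<le> (1 - x)^2 * norm (g x) * (1 + x)"
          using x by (intro mult_left_mono) auto
        also have "\<dots> = norm (g x) * ((1 + x) * (1 - x)^2)" by (simp add: algebra_simps)
        also have "\<dots> \<le> Bh" using Bh(2)[of x] x by simp
        finally show ?thesis by simp
      qed
      have "\<bar>alphaF F g k x\<bar> \<le> (\<bar>matrix_inv (F x) $ k $ 3\<bar> + \<bar>matrix_inv (F x) $ k $ 4\<bar>) * norm (g x)"
        by (rule alpha_abs)
      also have "\<dots> \<le> (C * (1 - x)^2 + C * (1 - x)^2) * norm (g x)"
        using c1 by (intro mult_right_mono) auto
      also have "\<dots> = 2 * C * ((1 - x)^2 * norm (g x))" by (simp add: algebra_simps)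
      also have "\<dots> \<le> 2 * C * Bh" using gb C0 by (intro mult_left_mono) auto
      finally show ?case .
    qed
    thus ?thesis by (rule int_from_right[OF calpha _ y])
  qed
  have "C2_on (LFinv F M g) ({-1<..<1} - {0}) \<and> LFinv F M g C1_differentiable_on {-1<..<1} \<and>
         (\<forall>y\<in>{-1<..<1} - {0}. LF F (LFinv F M g) y = g y)"
    by (rule vop[OF inv Fu du dv cv cw cg int1 int2])
  thus ?thesis by (simp add: F_def M_def)
qed


end
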